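(* There is an absolutely continuous function $f:[0,1]\to\mathbb{R}$ whose graph $G_f=\{(x,f(x)):x\in[0,1]\}$ is strongly porous, but every monotone subset of $G_f$ is nowhere dense in $G_f$. In particular, $G_f$ is not $\sigma$-monotone.
   Context: A set $X\subseteq\mathbb{R}^2$ is strongly porous if there is $p>0$ such that for every $x\in\mathbb{R}^2$ and every $r\in(0,\operatorname{diam}X)$ there is $y\in\mathbb{R}^2$ with $B(y,pr)\subseteq B(x,r)\setminus X$ (Euclidean balls). A metric space $(X,d)$ is monotone if there are a linear order $<$ on $X$ and $c>0$ with $d(x,y)\le c\,d(x,z)$ whenever $x<y<z$; it is $\sigma$-monotone if it is a countable union of monotone subspaces. *)

theory Defs
  imports "HOL-Analysis.Analysis"
begin

definition abs_continuous_on :: "real \<Rightarrow> real \<Rightarrow> (real \<Rightarrow> real) \<Rightarrow> bool" where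
  "abs_continuous_on a b f \<longleftrightarrow>
     (\<forall>\<epsilon>>0. \<exists>\<delta>>0. \<forall>(n::nat) (l::nat \<Rightarrow> real) (u::nat \<Rightarrow> real).
        (\<forall>k<n. a \<le> l k \<and> l k \<le> u k \<and> u k \<le> b) \<and>
        (\<forall>i<n. \<forall>j<n. i \<noteq> j \<longrightarrow> u i \<le> l j \<or> u j \<le> l i) \<and>
        (\<Sum>k<n. u k - l k) < \<delta>
        \<longrightarrow> (\<Sum>k<n. \<bar>f (u k) - f (l k)\<bar>) < \<epsilon>)"

definition strongly_porous :: "(real \<times> real) set \<Rightarrow> bool" where
  "strongly_porous X \<longleftrightarrow>
     (\<exists>p>0. \<forall>x. \<forall>r. 0 < r \<and> r < diameter X \<longrightarrow> (\<exists>y. ball y (p * r) \<subseteq> ball x r - X))"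

definition monotone_space :: "'a::metric_space set \<Rightarrow> bool" where
  "monotone_space A \<longleftrightarrow>
     (\<exists>R c. linear_order_on A R \<and> c > 0 \<and>
        (\<forall>x\<in>A. \<forall>y\<in>A. \<forall>z\<in>A. (x, y) \<in> R \<and> x \<noteq> y \<and> (y, z) \<in> R \<and> y \<noteq> z
            \<longrightarrow> dist x y \<le> c * dist x z))"

definition sigma_monotone :: "'a::metric_space set \<Rightarrow> bool" where
  "sigma_monotone X \<longleftrightarrow> (\<exists>M :: nat \<Rightarrow> 'a set. (\<forall>n. monotone_space (M n)) \<and> X = (\<Union>n. M n))"

definition nowhere_dense_in :: "'a::metric_space set \<Rightarrow> 'a set \<Rightarrow> bool" where
  "nowhere_dense_in A X \<longleftrightarrow>
     (subtopology euclidean X) interior_of ((subtopology euclidean X) closure_of A) = {}"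

definition graph_on :: "real set \<Rightarrow> (real \<Rightarrow> real) \<Rightarrow> (real \<times> real) set" where
  "graph_on S f = (\<lambda>x. (x, f x)) ` S"

end

theory Submission
  imports Defs
begin

definition pw :: "nat \<Rightarrow> nat" where "pw n = 16 * 4^n"
definition Qn :: "nat \<Rightarrow> real" where "Qn n = 1 / 2^(pw n)"
definition Ll :: "nat \<Rightarrow> real" where "Ll k = Qn (3*k)"
definition hh :: "nat \<Rightarrow> real" where "hh k = Qn (3*k+1)"
definition ee :: "nat \<Rightarrow> real" where "ee k = Qn (3*k+2)"
definition NN :: "nat \<Rightarrow> nat" where "NN k = 2^(pw (3*k))"
definition tent :: "real \<Rightarrow> real \<Rightarrow> real \<Rightarrow> real \<Rightarrow> real" where
  "tent c e M x = M * max 0 (e - \<bar>x - c\<bar>)"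
definition cc :: "nat \<Rightarrow> nat \<Rightarrow> real" where "cc k m = (real m + 1/2) * Ll k"
definition fj :: "nat \<Rightarrow> real \<Rightarrow> real" where
  "fj k x = (\<Sum>m<NN k. tent (cc k m) (ee k) (hh k / ee k) x)"
definition ff :: "real \<Rightarrow> real" where "ff x = (\<Sum>k. fj k x)"

lemma pw_Suc: "pw (Suc n) = 4 * pw n" by (simp add: pw_def)

lemma Qn_pos: "0 < Qn n" by (simp add: Qn_def)

lemma Qn_Suc: "Qn (Suc n) = Qn n ^ 4"
  by (simp add: Qn_def pw_Suc power_mult power_one_over mult.commute)

lemma Qn_0: "Qn 0 = 1/65536" by (simp add: Qn_def pw_def)

lemma Qn_le: "Qn n \<le> 1/65536"
proof (induction n)
  case 0 then show ?case by (simp add: Qn_0)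
next
  case (Suc n)
  have "Qn n ^ 4 \<le> Qn n ^ 1" using Qn_pos[of n] Suc
    by (intro power_decreasing) auto
  then show ?case using Suc by (simp add: Qn_Suc)
qed

lemma Qn_Suc_le: "Qn (Suc n) \<le> Qn n / 2^48"
proof -
  have q: "0 < Qn n" "Qn n \<le> 1/65536" by (rule Qn_pos, rule Qn_le)
  have "Qn n ^ 3 \<le> (1/65536)^3" using q by (intro power_mono) auto
  then have "Qn n * Qn n ^ 3 \<le> Qn n * (1/65536)^3" using q
    by (intro mult_left_mono) auto
  moreover have "Qn n ^ 4 = Qn n * Qn n ^ 3" by (simp add: eval_nat_numeral)
  ultimately have "Qn n ^ 4 \<le> Qn n * (1/65536)^3" by simp
  also have "\<dots> = Qn n / 2^48" by (simp add: power_divide)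
  finally show ?thesis by (simp add: Qn_Suc)
qed

lemma Qn_Suc_le2: "Qn (Suc n) \<le> Qn n / 2"
  using Qn_Suc_le[of n] Qn_pos[of n] by simp

lemma Qn_antimono: "m \<le> n \<Longrightarrow> Qn n \<le> Qn m"
proof (induction n)
  case 0 then show ?case by simp
next
  case (Suc n)
  then show ?case using Qn_Suc_le2[of n] Qn_pos[of n] by (cases "m = Suc n") auto
qed

lemma Qn_small: "Qn n \<le> (1/2)^n"
proof (induction n)
  case 0 then show ?case using Qn_le[of 0] by simp
next
  case (Suc n) then show ?case using Qn_Suc_le2[of n] by simp
qed

lemma Ll_pos: "0 < Ll k" and hh_pos: "0 < hh k" and ee_pos: "0 < ee k"
  by (simp_all add: Ll_def hh_def ee_def Qn_pos)

lemma hh_eq: "hh k = Ll k ^ 4" by (simp add: hh_def Ll_def Qn_Suc[symmetric])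
lemma ee_eq: "ee k = Ll k ^ 16"
proof -
  have "3*k+2 = Suc (Suc (3*k))" by simp
  then show ?thesis by (simp add: ee_def Ll_def Qn_Suc flip: power_mult)
qed

lemma tent_nonneg: "0 \<le> M \<Longrightarrow> 0 \<le> tent c e M x"
  by (simp add: tent_def)

lemma tent_lip: assumes "0 \<le> M" shows "\<bar>tent c e M x - tent c e M y\<bar> \<le> M * \<bar>x - y\<bar>"
proof -
  have "\<bar>max 0 (e - \<bar>x - c\<bar>) - max 0 (e - \<bar>y - c\<bar>)\<bar> \<le> \<bar>x - y\<bar>" by (simp add: abs_if max_def)
  then have "M * \<bar>max 0 (e - \<bar>x - c\<bar>) - max 0 (e - \<bar>y - c\<bar>)\<bar> \<le> M * \<bar>x - y\<bar>"
    using assms by (intro mult_left_mono) auto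
  then show ?thesis using assms by (simp add: tent_def abs_mult flip: right_diff_distrib)
qed

lemma tent_le: "0 \<le> M \<Longrightarrow> 0 \<le> e \<Longrightarrow> tent c e M x \<le> M * e"
  by (simp add: tent_def mult_left_mono)

lemma tent_zero: "e \<le> \<bar>x - c\<bar> \<Longrightarrow> tent c e M x = 0"
  by (simp add: tent_def)

lemma tent_center: "0 \<le> e \<Longrightarrow> tent c e M c = M * e"
  by (simp add: tent_def)

lemma tent_pos_near: "tent c e M x \<noteq> 0 \<Longrightarrow> \<bar>x - c\<bar> < e"
  by (auto simp: tent_def)

lemma sum_at_most_one:
  assumes "finite S" "\<And>i. i \<in> S \<Longrightarrow> 0 \<le> g i \<and> g i \<le> B" "0 \<le> B"
    and "\<And>i j. i \<in> S \<Longrightarrow> j \<in> S \<Longrightarrow> i \<noteq> j \<Longrightarrow> g i = 0 \<or> g j = 0"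
  shows "sum g S \<le> B"
proof (cases "\<exists>i\<in>S. g i \<noteq> 0")
  case True
  then obtain i where i: "i \<in> S" "g i \<noteq> 0" by blast
  have "sum g S = g i + sum g (S - {i})" using assms(1) i(1) by (simp add: sum.remove)
  also have "sum g (S - {i}) = 0" using assms(4)[OF i(1)] i(2) by (intro sum.neutral) auto
  finally show ?thesis using assms(2)[OF i(1)] by simp
next
  case False then show ?thesis using assms by simp
qed

lemma Ll_le: "Ll k \<le> 1/65536" using Qn_le[of "3*k"] by (simp add: Ll_def)

lemma ee_le: "ee k \<le> Ll k / 2^48"
proof -
  have "ee k \<le> hh k" unfolding ee_def hh_def by (rule Qn_antimono) simp
  moreover have "hh k \<le> Ll k / 2^48" unfolding Ll_def hh_def using Qn_Suc_le[of "3*k"] by simp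
  ultimately show ?thesis by linarith
qed

lemma ee_le16: "ee k \<le> Ll k / 16"
proof -
  have "Ll k / 2^48 \<le> Ll k / 16" using Ll_pos[of k] by (intro frac_le) auto
  then show ?thesis using ee_le[of k] by linarith
qed

lemma hh_le: "hh k \<le> Ll k / 2^48"
  unfolding Ll_def hh_def using Qn_Suc_le[of "3*k"] by simp

lemma ee_le_hh: "ee k \<le> hh k / 2^48"
  unfolding ee_def hh_def using Qn_Suc_le[of "3*k+1"] by simp

lemma cc_dist: "\<bar>cc k m - cc k m'\<bar> = \<bar>real m - real m'\<bar> * Ll k"
proof -
  have "cc k m - cc k m' = (real m - real m') * Ll k" by (simp add: cc_def algebra_simps)
  then show ?thesis using Ll_pos[of k] by (simp add: abs_mult)
qed

lemma cc_dist_ge: "m \<noteq> m' \<Longrightarrow> Ll k \<le> \<bar>cc k m - cc k m'\<bar>"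
proof -
  assume "m \<noteq> m'"
  then have "1 \<le> \<bar>real m - real m'\<bar>" by linarith
  then show ?thesis using Ll_pos[of k] by (simp add: cc_dist) 
qed

lemma MM_nonneg: "0 \<le> hh k / ee k" using hh_pos ee_pos by (simp add: less_imp_le)

lemma tent_k_center: "tent (cc k m) (ee k) (hh k / ee k) (cc k m) = hh k"
  using ee_pos[of k] by (simp add: tent_center)

lemma fj_nonneg: "0 \<le> fj k x"
  unfolding fj_def by (intro sum_nonneg tent_nonneg MM_nonneg)

lemma fj_le: "fj k x \<le> hh k"
  unfolding fj_def
proof (rule sum_at_most_one)
  fix i :: nat assume "i \<in> {..<NN k}"
  show "0 \<le> tent (cc k i) (ee k) (hh k / ee k) x \<and> tent (cc k i) (ee k) (hh k / ee k) x \<le> hh k"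
  proof
    show "0 \<le> tent (cc k i) (ee k) (hh k / ee k) x" by (intro tent_nonneg MM_nonneg)
    have "tent (cc k i) (ee k) (hh k / ee k) x \<le> hh k / ee k * ee k"
      using ee_pos[of k] by (intro tent_le MM_nonneg) auto
    then show "tent (cc k i) (ee k) (hh k / ee k) x \<le> hh k" using ee_pos[of k] by simp
  qed
next
  fix i j :: nat assume "i \<noteq> j"
  show "tent (cc k i) (ee k) (hh k / ee k) x = 0 \<or> tent (cc k j) (ee k) (hh k / ee k) x = 0"
  proof (rule ccontr)
    assume "\<not> ?thesis"
    then have "\<bar>x - cc k i\<bar> < ee k" "\<bar>x - cc k j\<bar> < ee k" using tent_pos_near by auto
    moreover have "Ll k \<le> \<bar>cc k i - cc k j\<bar>" using cc_dist_ge[OF \<open>i \<noteq> j\<close>] .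
    moreover have "ee k \<le> Ll k / 16" by (rule ee_le16)
    ultimately show False using Ll_pos[of k] by linarith
  qed
qed (use hh_pos[of k] in auto)

lemma fj_lip: "\<bar>fj k x - fj k y\<bar> \<le> real (NN k) * (hh k / ee k) * \<bar>x - y\<bar>"
proof -
  have "\<bar>fj k x - fj k y\<bar> = \<bar>\<Sum>m<NN k. tent (cc k m) (ee k) (hh k / ee k) x - tent (cc k m) (ee k) (hh k / ee k) y\<bar>"
    by (simp add: fj_def sum_subtractf)
  also have "\<dots> \<le> (\<Sum>m<NN k. \<bar>tent (cc k m) (ee k) (hh k / ee k) x - tent (cc k m) (ee k) (hh k / ee k) y\<bar>)"
    by (rule sum_abs)
  also have "\<dots> \<le> (\<Sum>m<NN k. (hh k / ee k) * \<bar>x - y\<bar>)"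
    by (intro sum_mono tent_lip MM_nonneg)
  also have "\<dots> = real (NN k) * (hh k / ee k) * \<bar>x - y\<bar>" by simp
  finally show ?thesis .
qed

lemma fj_near_center:
  assumes m0: "m0 < NN k" and x: "\<bar>x - cc k m0\<bar> \<le> Ll k / 2"
  shows "fj k x = tent (cc k m0) (ee k) (hh k / ee k) x"
proof -
  have "fj k x = tent (cc k m0) (ee k) (hh k / ee k) x + (\<Sum>m\<in>{..<NN k} - {m0}. tent (cc k m) (ee k) (hh k / ee k) x)"
    unfolding fj_def using m0 by (simp add: sum.remove)
  also have "(\<Sum>m\<in>{..<NN k} - {m0}. tent (cc k m) (ee k) (hh k / ee k) x) = 0"
  proof (intro sum.neutral ballI tent_zero)
    fix m assume "m \<in> {..<NN k} - {m0}"
    then have "Ll k \<le> \<bar>cc k m - cc k m0\<bar>" using cc_dist_ge[of m m0 k] by auto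
    moreover have "ee k \<le> Ll k / 16" by (rule ee_le16)
    moreover have "\<bar>cc k m - cc k m0\<bar> \<le> \<bar>x - cc k m\<bar> + \<bar>x - cc k m0\<bar>" by arith
    ultimately show "ee k \<le> \<bar>x - cc k m\<bar>" using x Ll_pos[of k] by linarith
  qed
  finally show ?thesis by simp
qed

lemma fj_center: "m0 < NN k \<Longrightarrow> fj k (cc k m0) = hh k"
  using fj_near_center[of m0 k "cc k m0"] Ll_pos[of k] tent_k_center by simp

lemma fj_off_center: "m0 < NN k \<Longrightarrow> ee k \<le> \<bar>x - cc k m0\<bar> \<Longrightarrow> \<bar>x - cc k m0\<bar> \<le> Ll k / 2 \<Longrightarrow> fj k x = 0"
  using fj_near_center[of m0 k x] tent_zero by simp

lemma hh_Suc: "hh (Suc n) \<le> hh n / 2"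
proof -
  have eq: "3 * Suc n + 1 = Suc (Suc (Suc (3*n+1)))" by simp
  have "hh (Suc n) = Qn (Suc (Suc (Suc (3*n+1))))" unfolding hh_def by (simp only: eq)
  also have "\<dots> \<le> Qn (3*n+1) / 2"
    using Qn_Suc_le2[of "Suc (Suc (3*n+1))"] Qn_Suc_le2[of "Suc (3*n+1)"] Qn_Suc_le2[of "3*n+1"] Qn_pos[of "3*n+1"]
    by linarith
  finally show ?thesis by (simp add: hh_def)
qed

lemma hh_geom: "hh (j + K) \<le> hh K * (1/2)^j"
proof (induction j)
  case 0 then show ?case by simp
next
  case (Suc j) then show ?case using hh_Suc[of "j+K"] by simp
qed

lemma hh_le_geom: "hh k \<le> (1/2)^k"
proof -
  have "hh k \<le> hh 0 * (1/2)^k" using hh_geom[of k 0] by simp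
  also have "\<dots> \<le> (1/2)^k" using Qn_le[of 1] by (simp add: hh_def)
  finally show ?thesis .
qed

lemma summable_hh: "summable hh"
proof (rule summable_comparison_test[of _ "\<lambda>k. (1/2::real)^k"])
  show "\<exists>N. \<forall>n\<ge>N. norm (hh n) \<le> (1/2)^n"
  proof (intro exI allI impI)
    fix n :: nat
    show "norm (hh n) \<le> (1/2)^n" using hh_le_geom[of n] hh_pos[of n] by simp
  qed
qed simp

lemma summable_fj: "summable (\<lambda>k. fj k x)"
  by (rule summable_comparison_test[OF _ summable_hh]) (use fj_nonneg fj_le in auto)

lemma summable_hh_shift: "summable (\<lambda>j. hh (j + K))"
  using summable_ignore_initial_segment[OF summable_hh, of K] by simp

lemma tail_hh: "(\<Sum>j. hh (j + K)) \<le> 2 * hh K"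
proof -
  have "(\<Sum>j. hh (j + K)) \<le> (\<Sum>j. hh K * (1/2)^j)"
    by (intro suminf_le summable_hh_shift hh_geom summable_mult summable_geometric) auto
  also have "\<dots> = hh K * 2" by (simp add: suminf_mult suminf_geometric)
  finally show ?thesis by simp
qed

definition tl_f :: "nat \<Rightarrow> real \<Rightarrow> real" where "tl_f K x = (\<Sum>j. fj (j + K) x)"

lemma tl_f_bounds: "0 \<le> tl_f K x" "tl_f K x \<le> 2 * hh K"
proof -
  have s: "summable (\<lambda>j. fj (j + K) x)" using summable_ignore_initial_segment[OF summable_fj[of x], of K] by simp
  show "0 \<le> tl_f K x" unfolding tl_f_def by (intro suminf_nonneg s fj_nonneg)
  have "tl_f K x \<le> (\<Sum>j. hh (j + K))" unfolding tl_f_def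
    by (intro suminf_le s summable_hh_shift fj_le)
  then show "tl_f K x \<le> 2 * hh K" using tail_hh[of K] by linarith
qed

lemma ff_split: "ff x = (\<Sum>j<K. fj j x) + tl_f K x"
  unfolding ff_def tl_f_def using suminf_split_initial_segment[OF summable_fj, of x K] by simp

lemma ff_nonneg: "0 \<le> ff x" and ff_le: "ff x \<le> 2 * hh 0"
  using ff_split[of x 0] tl_f_bounds[of 0 x] by auto

definition Lam :: "nat \<Rightarrow> real" where "Lam K = (\<Sum>j<K. real (NN j) * (hh j / ee j))"

lemma NN_eq: "real (NN j) = 1 / Ll j" by (simp add: NN_def Ll_def Qn_def)

lemma Ll_Suc: "Ll (Suc K) = Ll K ^ 64"
proof -
  have eq: "3 * Suc K = Suc (Suc (Suc (3*K)))" by simp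
  have "Ll (Suc K) = Qn (Suc (Suc (Suc (3*K))))" unfolding Ll_def by (simp only: eq)
  then show ?thesis by (simp add: Ll_def Qn_Suc flip: power_mult)
qed

lemma Lam_term: "real (NN j) * (hh j / ee j) = 1 / Ll j ^ 13"
proof -
  let ?q = "Ll j"
  have q: "0 < ?q" by (rule Ll_pos)
  have a: "?q ^ 16 = ?q ^ 13 * ?q ^ 3" and b: "?q ^ 4 = ?q * ?q ^ 3" by (simp_all flip: power_add power_Suc)
  have "real (NN j) * (hh j / ee j) = (1 / ?q) * ((?q * ?q ^ 3) / (?q ^ 13 * ?q ^ 3))"
    by (simp only: NN_eq hh_eq ee_eq a b)
  also have "\<dots> = 1 / ?q ^ 13" using q by (simp add: field_simps)
  finally show ?thesis .
qed

lemma Lam_le: "Lam K \<le> 1 / Ll K"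
proof (induction K)
  case 0 then show ?case using Ll_pos[of 0] by (simp add: Lam_def)
next
  case (Suc K)
  let ?q = "Ll K"
  have q: "0 < ?q" "?q \<le> 1/2" using Ll_pos[of K] Ll_le[of K] by auto
  have "Lam (Suc K) = Lam K + 1 / ?q ^ 13" by (simp only: Lam_def sum.lessThan_Suc Lam_term)
  also have "\<dots> \<le> 1 / ?q + 1 / ?q ^ 13" using Suc by simp
  also have "\<dots> \<le> 2 / ?q ^ 13"
  proof -
    have "?q ^ 13 \<le> ?q ^ 1" using q by (intro power_decreasing) auto
    then have "1 / ?q \<le> 1 / ?q ^ 13" using q by (intro divide_left_mono) auto
    then show ?thesis by simp
  qed
  also have "\<dots> \<le> 1 / ?q ^ 64"
  proof -
    have "?q ^ 64 = ?q ^ 13 * ?q ^ 51" by (simp flip: power_add)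
    moreover have "?q ^ 51 \<le> ?q ^ 1" using q by (intro power_decreasing) auto
    moreover have "?q ^ 13 * ?q ^ 51 \<le> ?q ^ 13 * ?q ^ 1" using q \<open>?q ^ 51 \<le> ?q ^ 1\<close>
      by (intro mult_left_mono) auto
    ultimately have "?q ^ 64 \<le> ?q ^ 13 * ?q" by simp
    also have "\<dots> \<le> ?q ^ 13 * (1/2)" using q by (intro mult_left_mono) auto
    finally have "2 * ?q ^ 64 \<le> ?q ^ 13" by simp
    then show ?thesis using q by (simp add: field_simps)
  qed
  finally show ?case by (simp add: Ll_Suc)
qed

lemma Lam_nonneg: "0 \<le> Lam K"
  unfolding Lam_def by (intro sum_nonneg mult_nonneg_nonneg MM_nonneg of_nat_0_le_iff)

lemma head_lip: "\<bar>(\<Sum>j<K. fj j x) - (\<Sum>j<K. fj j y)\<bar> \<le> Lam K * \<bar>x - y\<bar>"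
proof -
  have "\<bar>(\<Sum>j<K. fj j x) - (\<Sum>j<K. fj j y)\<bar> = \<bar>\<Sum>j<K. fj j x - fj j y\<bar>" by (simp add: sum_subtractf)
  also have "\<dots> \<le> (\<Sum>j<K. \<bar>fj j x - fj j y\<bar>)" by (rule sum_abs)
  also have "\<dots> \<le> (\<Sum>j<K. real (NN j) * (hh j / ee j) * \<bar>x - y\<bar>)" by (intro sum_mono fj_lip)
  also have "\<dots> = Lam K * \<bar>x - y\<bar>" by (simp add: Lam_def sum_distrib_right)
  finally show ?thesis .
qed

lemma head_lip2: "\<bar>(\<Sum>j<K. fj j x) - (\<Sum>j<K. fj j y)\<bar> \<le> \<bar>x - y\<bar> / Ll K"
proof -
  have "Lam K * \<bar>x - y\<bar> \<le> (1 / Ll K) * \<bar>x - y\<bar>" by (intro mult_right_mono Lam_le) auto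
  then show ?thesis using head_lip[where K=K and x=x and y=y] by simp
qed

lemma ff_modulus: "\<bar>ff x - ff y\<bar> \<le> \<bar>x - y\<bar> / Ll K + 2 * hh K"
  using ff_split[of x K] ff_split[of y K] head_lip2[where K=K and x=x and y=y] tl_f_bounds[of K x] tl_f_bounds[of K y]
  by linarith

lemma hh_small: "0 < \<epsilon> \<Longrightarrow> \<exists>K. hh K < \<epsilon>"
proof -
  assume "0 < \<epsilon>"
  then obtain K where "(1/2::real)^K < \<epsilon>" using real_arch_pow_inv[of \<epsilon> "1/2"] by auto
  then show ?thesis using hh_le_geom[of K] by (intro exI[of _ K]) linarith
qed

lemma Ll_small: "0 < \<epsilon> \<Longrightarrow> \<exists>K. Ll K < \<epsilon>"
proof -
  assume "0 < \<epsilon>"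
  then obtain K where "hh K < \<epsilon>" using hh_small by blast
  moreover have "Ll (Suc K) \<le> hh K"
    using Qn_antimono[of "3*K+1" "3*(Suc K)"] by (simp add: Ll_def hh_def)
  ultimately show ?thesis by (intro exI[of _ "Suc K"]) linarith
qed

lemma ff_unif: "0 < \<epsilon> \<Longrightarrow> \<exists>\<delta>>0. \<forall>x y. \<bar>x - y\<bar> \<le> \<delta> \<longrightarrow> \<bar>ff x - ff y\<bar> \<le> \<epsilon>"
proof -
  assume e: "0 < \<epsilon>"
  then obtain K where K: "hh K < \<epsilon>/4" using hh_small[of "\<epsilon>/4"] by auto
  define \<delta> where "\<delta> = \<epsilon> * Ll K / 2"
  have d: "0 < \<delta>" using e Ll_pos[of K] by (simp add: \<delta>_def)
  have "\<bar>ff x - ff y\<bar> \<le> \<epsilon>" if "\<bar>x - y\<bar> \<le> \<delta>" for x y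
  proof -
    have "\<bar>x - y\<bar> / Ll K \<le> \<delta> / Ll K" using that Ll_pos[of K] by (simp add: divide_right_mono)
    also have "\<dots> = \<epsilon>/2" using Ll_pos[of K] by (simp add: \<delta>_def)
    finally show ?thesis using ff_modulus[of x y K] K by linarith
  qed
  then show ?thesis using d by blast
qed

lemma ff_cont: "continuous_on UNIV ff"
  unfolding continuous_on_iff
proof (intro ballI allI impI)
  fix x :: real and e :: real assume "x \<in> UNIV" "0 < e"
  then obtain d where d: "0 < d" "\<forall>x y. \<bar>x - y\<bar> \<le> d \<longrightarrow> \<bar>ff x - ff y\<bar> \<le> e/2"
    using ff_unif[of "e/2"] by auto
  show "\<exists>d>0. \<forall>x'\<in>UNIV. dist x' x < d \<longrightarrow> dist (ff x') (ff x) < e"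
  proof (intro exI[of _ d] conjI ballI impI)
    fix x' assume "dist x' x < d"
    then have "\<bar>ff x' - ff x\<bar> \<le> e/2" using d(2) by (simp add: dist_real_def)
    then show "dist (ff x') (ff x) < e" using \<open>0 < e\<close> by (simp add: dist_real_def)
  qed (rule d(1))
qed

lemma mono_sum_le:
  fixes p :: "real \<Rightarrow> real" and l u :: "'i \<Rightarrow> real"
  assumes mono: "mono p"
  shows "finite K \<Longrightarrow> a \<le> b \<Longrightarrow> (\<forall>k\<in>K. a \<le> l k \<and> l k \<le> u k \<and> u k \<le> b) \<Longrightarrow>
    (\<forall>i\<in>K. \<forall>j\<in>K. i \<noteq> j \<longrightarrow> u i \<le> l j \<or> u j \<le> l i) \<Longrightarrow>
    (\<Sum>k\<in>K. p (u k) - p (l k)) \<le> p b - p a"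
proof (induction "card K" arbitrary: K b rule: less_induct)
  case less
  show ?case
  proof (cases "K = {}")
    case True then show ?thesis using less.prems mono by (simp add: monoD)
  next
    case False
    define U where "U = Max (u ` K)"
    have "U \<in> u ` K" unfolding U_def using False less.prems(1) by (intro Max_in) auto
    then obtain k0 where k0: "k0 \<in> K" "u k0 = U" by auto
    have umax: "u i \<le> u k0" if "i \<in> K" for i
      using that less.prems(1) k0 unfolding U_def by auto
    define K2 where "K2 = {i \<in> K - {k0}. l i < u i}"
    have fin2: "finite K2" using less.prems(1) by (simp add: K2_def)
    have sub2: "K2 \<subseteq> K - {k0}" by (auto simp: K2_def)
    have card2: "card K2 < card K"
      using less.prems(1) k0(1) sub2 by (intro psubset_card_mono) auto
    have K2b: "\<forall>k\<in>K2. a \<le> l k \<and> l k \<le> u k \<and> u k \<le> l k0"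
    proof
      fix i assume i: "i \<in> K2"
      then have iK: "i \<in> K" "i \<noteq> k0" "l i < u i" by (auto simp: K2_def)
      then have "u i \<le> l k0 \<or> u k0 \<le> l i" using less.prems(4) k0(1) by blast
      moreover have "\<not> u k0 \<le> l i" using umax[OF iK(1)] iK(3) by linarith
      ultimately show "a \<le> l i \<and> l i \<le> u i \<and> u i \<le> l k0" using less.prems(3) iK by auto
    qed
    have IH: "(\<Sum>k\<in>K2. p (u k) - p (l k)) \<le> p (l k0) - p a"
      using less.hyps[OF card2 fin2 _ K2b] less.prems(3,4) k0(1) sub2 by (auto simp: subset_iff)
    have "(\<Sum>k\<in>K. p (u k) - p (l k)) = (p (u k0) - p (l k0)) + (\<Sum>k\<in>K - {k0}. p (u k) - p (l k))"
      using less.prems(1) k0(1) by (simp add: sum.remove)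
    also have "(\<Sum>k\<in>K - {k0}. p (u k) - p (l k)) = (\<Sum>k\<in>K2. p (u k) - p (l k))"
    proof (rule sum.mono_neutral_right)
      show "finite (K - {k0})" using less.prems(1) by simp
      show "K2 \<subseteq> K - {k0}" by (rule sub2)
      show "\<forall>i\<in>K - {k0} - K2. p (u i) - p (l i) = 0"
      proof
        fix i assume "i \<in> K - {k0} - K2"
        then have "l i = u i" using less.prems(3) by (force simp: K2_def)
        then show "p (u i) - p (l i) = 0" by simp
      qed
    qed
    finally have "(\<Sum>k\<in>K. p (u k) - p (l k)) \<le> p (u k0) - p (l k0) + (p (l k0) - p a)" using IH by linarith
    moreover have "p (u k0) \<le> p b" using less.prems(3) k0(1) mono by (auto intro: monoD)
    ultimately show ?thesis by linarith
  qed
qed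

definition clampf :: "real \<Rightarrow> real \<Rightarrow> real \<Rightarrow> real" where
  "clampf c e x = max (c - e) (min x (c + e))"

lemma clampf_mono: "mono (clampf c e)"
  unfolding clampf_def by (intro monoI) auto

lemma tent_var: assumes "0 \<le> M" "0 \<le> e" "l \<le> u"
  shows "\<bar>tent c e M u - tent c e M l\<bar> \<le> M * (clampf c e u - clampf c e l)"
proof -
  have t: "tent c e M x = M * (e - \<bar>clampf c e x - c\<bar>)" for x
    using assms(2) by (simp add: tent_def clampf_def max_def min_def abs_if)
  have "\<bar>(e - \<bar>clampf c e u - c\<bar>) - (e - \<bar>clampf c e l - c\<bar>)\<bar> \<le> clampf c e u - clampf c e l"
    using monoD[OF clampf_mono[of c e] assms(3)] by (simp add: abs_if)
  then have "M * \<bar>(e - \<bar>clampf c e u - c\<bar>) - (e - \<bar>clampf c e l - c\<bar>)\<bar> \<le> M * (clampf c e u - clampf c e l)"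
    using assms(1) by (intro mult_left_mono) auto
  then show ?thesis using assms(1) by (simp add: t abs_mult flip: right_diff_distrib)
qed

lemma clampf_range: "0 \<le> e \<Longrightarrow> clampf c e b - clampf c e a \<le> 2 * e"
  by (simp add: clampf_def max_def min_def)

definition Vj :: "nat \<Rightarrow> real" where "Vj j = 2 * hh j * real (NN j)"

lemma fj_var:
  assumes iv: "\<forall>k\<in>K. 0 \<le> l k \<and> l k \<le> u k \<and> u k \<le> 1"
    and no: "\<forall>i\<in>K. \<forall>j\<in>K. i \<noteq> j \<longrightarrow> u i \<le> l j \<or> u j \<le> l i" and fin: "finite K"
  shows "(\<Sum>k\<in>K. \<bar>fj j (u k) - fj j (l k)\<bar>) \<le> Vj j"
proof -
  let ?M = "hh j / ee j"
  have e0: "0 \<le> ee j" using ee_pos[of j] by simp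
  have "(\<Sum>k\<in>K. \<bar>fj j (u k) - fj j (l k)\<bar>)
      = (\<Sum>k\<in>K. \<bar>\<Sum>m<NN j. tent (cc j m) (ee j) ?M (u k) - tent (cc j m) (ee j) ?M (l k)\<bar>)"
    by (simp add: fj_def sum_subtractf)
  also have "\<dots> \<le> (\<Sum>k\<in>K. \<Sum>m<NN j. \<bar>tent (cc j m) (ee j) ?M (u k) - tent (cc j m) (ee j) ?M (l k)\<bar>)"
    by (intro sum_mono sum_abs)
  also have "\<dots> = (\<Sum>m<NN j. \<Sum>k\<in>K. \<bar>tent (cc j m) (ee j) ?M (u k) - tent (cc j m) (ee j) ?M (l k)\<bar>)"
    by (rule sum.swap)
  also have "\<dots> \<le> (\<Sum>m<NN j. \<Sum>k\<in>K. ?M * (clampf (cc j m) (ee j) (u k) - clampf (cc j m) (ee j) (l k)))"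
    using iv by (intro sum_mono tent_var MM_nonneg e0) auto
  also have "\<dots> = (\<Sum>m<NN j. ?M * (\<Sum>k\<in>K. clampf (cc j m) (ee j) (u k) - clampf (cc j m) (ee j) (l k)))"
    by (simp add: sum_distrib_left)
  also have "\<dots> \<le> (\<Sum>m<NN j. ?M * (clampf (cc j m) (ee j) 1 - clampf (cc j m) (ee j) 0))"
    by (intro sum_mono mult_left_mono MM_nonneg mono_sum_le[OF clampf_mono] fin iv no) auto
  also have "\<dots> \<le> (\<Sum>m<NN j. ?M * (2 * ee j))"
    by (intro sum_mono mult_left_mono MM_nonneg clampf_range e0)
  also have "\<dots> = Vj j" using ee_pos[of j] by (simp add: Vj_def)
  finally show ?thesis .
qed

lemma Vj_le: "Vj j \<le> 2 * Ll j"
proof -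
  have "Vj j = 2 * Ll j ^ 3" using Ll_pos[of j]
    by (simp add: Vj_def hh_eq NN_eq field_simps eval_nat_numeral)
  moreover have "Ll j ^ 3 \<le> Ll j ^ 1" using Ll_pos[of j] Ll_le[of j] by (intro power_decreasing) auto
  ultimately show ?thesis by simp
qed

lemma Ll_Suc_le: "Ll (Suc j) \<le> Ll j / 2"
proof -
  have "Ll j ^ 64 \<le> Ll j ^ 2" using Ll_pos[of j] Ll_le[of j] by (intro power_decreasing) auto
  moreover have "Ll j ^ 2 \<le> Ll j / 2" using Ll_pos[of j] Ll_le[of j]
    by (simp add: power2_eq_square mult_left_mono)
  ultimately show ?thesis by (simp add: Ll_Suc)
qed

lemma Ll_geom: "Ll (j + K) \<le> Ll K * (1/2)^j"
proof (induction j)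
  case 0 then show ?case by simp
next
  case (Suc j) then show ?case using Ll_Suc_le[of "j+K"] by simp
qed

lemma summable_Vshift: "summable (\<lambda>j. Vj (j + K))"
proof (rule summable_comparison_test[of _ "\<lambda>j. 2 * Ll K * (1/2)^j"])
  show "\<exists>N. \<forall>n\<ge>N. norm (Vj (n + K)) \<le> 2 * Ll K * (1 / 2) ^ n"
  proof (intro exI allI impI)
    fix n
    have "0 \<le> Vj (n+K)" unfolding Vj_def by (intro mult_nonneg_nonneg) (auto simp: less_imp_le hh_pos)
    then show "norm (Vj (n + K)) \<le> 2 * Ll K * (1 / 2) ^ n" using Vj_le[of "n+K"] Ll_geom[of n K] by simp
  qed
qed (intro summable_mult summable_geometric; simp)

lemma tail_V: "(\<Sum>j. Vj (j + K)) \<le> 4 * Ll K"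
proof -
  have "(\<Sum>j. Vj (j + K)) \<le> (\<Sum>j. 2 * Ll K * (1/2)^j)"
  proof (intro suminf_le summable_Vshift summable_mult summable_geometric)
    fix n
    show "Vj (n + K) \<le> 2 * Ll K * (1 / 2) ^ n" using Vj_le[of "n+K"] Ll_geom[of n K] by simp
  qed simp
  also have "\<dots> = 2 * Ll K * 2" by (simp add: suminf_mult suminf_geometric)
  finally show ?thesis by simp
qed

lemma tl_var:
  assumes iv: "\<forall>k\<in>K. 0 \<le> l k \<and> l k \<le> u k \<and> u k \<le> 1"
    and no: "\<forall>i\<in>K. \<forall>j\<in>K. i \<noteq> j \<longrightarrow> u i \<le> l j \<or> u j \<le> l i" and fin: "finite K"
  shows "(\<Sum>k\<in>K. \<bar>tl_f J (u k) - tl_f J (l k)\<bar>) \<le> 4 * Ll J"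
proof -
  define a where "a k j = fj (j + J) (u k) - fj (j + J) (l k)" for k j
  have sa: "summable (\<lambda>j. \<bar>a k j\<bar>)" for k
  proof (rule summable_comparison_test[OF _ summable_hh_shift[of J]])
    show "\<exists>N. \<forall>n\<ge>N. norm \<bar>a k n\<bar> \<le> hh (n + J)"
    proof (intro exI allI impI)
      fix n
      show "norm \<bar>a k n\<bar> \<le> hh (n + J)"
        using fj_nonneg[of "n+J" "u k"] fj_nonneg[of "n+J" "l k"] fj_le[of "n+J" "u k"] fj_le[of "n+J" "l k"]
        unfolding a_def real_norm_def by linarith
    qed
  qed
  have tl: "tl_f J (u k) - tl_f J (l k) = (\<Sum>j. a k j)" for k
  proof -
    have s1: "summable (\<lambda>j. fj (j + J) x)" for x using summable_ignore_initial_segment[OF summable_fj[of x], of J] by simp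
    show ?thesis unfolding tl_f_def a_def using suminf_diff[OF s1 s1] by simp
  qed
  have "(\<Sum>k\<in>K. \<bar>tl_f J (u k) - tl_f J (l k)\<bar>) \<le> (\<Sum>k\<in>K. \<Sum>j. \<bar>a k j\<bar>)"
    unfolding tl by (intro sum_mono summable_rabs sa)
  also have "\<dots> = (\<Sum>j. \<Sum>k\<in>K. \<bar>a k j\<bar>)" using sa by (simp add: suminf_sum)
  also have "\<dots> \<le> (\<Sum>j. Vj (j + J))"
  proof (rule suminf_le)
    show "\<And>n. (\<Sum>k\<in>K. \<bar>a k n\<bar>) \<le> Vj (n + J)" unfolding a_def by (rule fj_var[OF iv no fin])
    show "summable (\<lambda>n. \<Sum>k\<in>K. \<bar>a k n\<bar>)" using sa by (intro summable_sum) auto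
    show "summable (\<lambda>j. Vj (j + J))" by (rule summable_Vshift)
  qed
  also have "\<dots> \<le> 4 * Ll J" by (rule tail_V)
  finally show ?thesis .
qed

lemma ff_ac: "abs_continuous_on 0 1 ff"
  unfolding abs_continuous_on_def
proof (intro allI impI)
  fix \<epsilon> :: real assume e: "0 < \<epsilon>"
  obtain J where J: "Ll J < \<epsilon> / 8" using Ll_small[of "\<epsilon>/8"] e by auto
  define \<delta> where "\<delta> = \<epsilon> / (2 * (Lam J + 1))"
  have d: "0 < \<delta>" using e Lam_nonneg[of J] by (simp add: \<delta>_def)
  show "\<exists>\<delta>>0. \<forall>(n::nat) l u. (\<forall>k<n. 0 \<le> l k \<and> l k \<le> u k \<and> u k \<le> 1) \<and>
            (\<forall>i<n. \<forall>j<n. i \<noteq> j \<longrightarrow> u i \<le> l j \<or> u j \<le> l i) \<and> (\<Sum>k<n. u k - l k) < \<delta> \<longrightarrow>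
            (\<Sum>k<n. \<bar>ff (u k) - ff (l k)\<bar>) < \<epsilon>"
  proof (intro exI[of _ \<delta>] conjI allI impI, goal_cases)
    case 1 show ?case by (rule d)
  next
    case (2 n l u)
    note H = 2
    have iv: "\<forall>k\<in>{..<n}. 0 \<le> l k \<and> l k \<le> u k \<and> u k \<le> 1" using H by auto
    have no: "\<forall>i\<in>{..<n}. \<forall>j\<in>{..<n}. i \<noteq> j \<longrightarrow> u i \<le> l j \<or> u j \<le> l i" using H by auto
    have "(\<Sum>k<n. \<bar>ff (u k) - ff (l k)\<bar>) \<le>
        (\<Sum>k<n. Lam J * (u k - l k) + \<bar>tl_f J (u k) - tl_f J (l k)\<bar>)"
    proof (intro sum_mono)
      fix k assume "k \<in> {..<n}"
      then have "l k \<le> u k" using H by auto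
      then show "\<bar>ff (u k) - ff (l k)\<bar> \<le> Lam J * (u k - l k) + \<bar>tl_f J (u k) - tl_f J (l k)\<bar>"
        using ff_split[of "u k" J] ff_split[of "l k" J] head_lip[where K=J and x="u k" and y="l k"] by simp
    qed
    also have "\<dots> = Lam J * (\<Sum>k<n. u k - l k) + (\<Sum>k<n. \<bar>tl_f J (u k) - tl_f J (l k)\<bar>)"
      by (simp add: sum.distrib sum_distrib_left)
    also have "\<dots> \<le> Lam J * \<delta> + 4 * Ll J"
      using H tl_var[OF iv no finite_lessThan[of n], of J] Lam_nonneg[of J] by (intro add_mono mult_left_mono) auto
    also have "\<dots> < \<epsilon>"
    proof -
      have "Lam J * \<delta> \<le> \<epsilon> / 2" using e Lam_nonneg[of J] by (simp add: \<delta>_def field_simps)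
      then show ?thesis using J by linarith
    qed
    finally show ?case .
  qed
qed

definition GG :: "(real \<times> real) set" where "GG = graph_on {0..1} ff"

lemma GG_mem: "p \<in> GG \<longleftrightarrow> (\<exists>x\<in>{0..1}. p = (x, ff x))"
  by (auto simp: GG_def graph_on_def)

lemma dist_pair_fst: "\<bar>a - c\<bar> \<le> dist (a, b) (c, d)"
  using dist_fst_le[of "(a,b)" "(c,d)"] by (simp add: dist_real_def)

lemma dist_pair_snd: "\<bar>b - d\<bar> \<le> dist (a, b) (c, d)"
  using dist_snd_le[of "(a,b)" "(c,d)"] by (simp add: dist_real_def)

lemma aux_lin: "(X::real) < 2 * ((X + R) / 4) \<Longrightarrow> R < 2 * ((X + R) / 4) \<Longrightarrow> False"
  by (simp add: field_simps)

lemma aux_lin2: "0 \<le> (A::real) \<Longrightarrow> (A/2 + R)/4 \<le> Z \<Longrightarrow> Z \<le> P + Q + S \<Longrightarrow> P \<le> A/32 \<Longrightarrow>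
   Q \<le> lam/32 \<Longrightarrow> S < lam/32 \<Longrightarrow> lam \<le> R \<Longrightarrow> 0 < lam \<Longrightarrow> False"
  by (simp add: field_simps)

lemma four_choice:
  fixes a b xm xp Yc r lam :: real
  assumes "xp - xm = lam / 2" "0 \<le> lam"
  shows "\<exists>x'\<in>{xm, xp}. \<exists>Y\<in>{Yc - r/2, Yc + r/2}. (\<bar>a\<bar> * lam / 2 + \<bar>r\<bar>) / 4 \<le> \<bar>a * x' + b - Y\<bar>"
proof (rule ccontr)
  assume "\<not> ?thesis"
  then have h: "\<bar>a * xm + b - (Yc - r/2)\<bar> < (\<bar>a\<bar> * lam / 2 + \<bar>r\<bar>) / 4"
    "\<bar>a * xm + b - (Yc + r/2)\<bar> < (\<bar>a\<bar> * lam / 2 + \<bar>r\<bar>) / 4"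
    "\<bar>a * xp + b - (Yc + r/2)\<bar> < (\<bar>a\<bar> * lam / 2 + \<bar>r\<bar>) / 4"
    by auto
  have e1: "(a * xp + b - (Yc + r/2)) - (a * xm + b - (Yc + r/2)) = a * (lam / 2)"
    using assms(1) by (simp add: algebra_simps flip: assms(1))
  have "\<bar>a * (lam/2)\<bar> = \<bar>a\<bar> * lam / 2" using assms(2) by (simp add: abs_mult)
  then have "\<bar>a\<bar> * lam / 2 < 2 * ((\<bar>a\<bar> * lam / 2 + \<bar>r\<bar>) / 4)" using h(2,3) e1 by linarith
  moreover have "\<bar>r\<bar> < 2 * ((\<bar>a\<bar> * lam / 2 + \<bar>r\<bar>) / 4)" using h(1,2) by linarith
  ultimately show False
    using aux_lin[of "\<bar>a\<bar> * lam / 2" "\<bar>r\<bar>"] by blast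
qed

lemma hole:
  assumes uv: "0 \<le> u" "v \<le> 1" "u < v" and lam: "lam = v - u"
    and r: "lam \<le> r" and win: "x1 - r/2 \<le> u" "v \<le> x1 + r/2"
    and aff: "\<forall>x\<in>{u..v}. \<bar>ff x - (a * x + b)\<bar> \<le> lam / 32"
  shows "\<exists>y. ball y (lam / 32) \<subseteq> ball (x1, Y0) r - GG"
proof -
  define xm where "xm = (u + v) / 2 - lam / 4"
  define xp where "xp = (u + v) / 2 + lam / 4"
  have lpos: "0 < lam" using uv lam by simp
  obtain x' Y where x': "x' \<in> {xm, xp}" and Y: "Y \<in> {Y0 - r/2, Y0 + r/2}"
    and big: "(\<bar>a\<bar> * lam / 2 + \<bar>r\<bar>) / 4 \<le> \<bar>a * x' + b - Y\<bar>"
    using four_choice[where a=a and b=b and xm=xm and xp=xp and Yc=Y0 and r=r and lam=lam] lpos by (auto simp: xm_def xp_def)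
  have x'in: "u + lam/4 \<le> x'" "x' \<le> v - lam/4" using x' lam uv by (auto simp: xm_def xp_def field_simps)
  have rpos: "0 < r" using r lpos by linarith
  show ?thesis
  proof (intro exI[of _ "(x', Y)"] subsetI DiffI)
    fix p assume p: "p \<in> ball (x', Y) (lam / 32)"
    have d1: "dist (x', Y) (x1, Y0) \<le> 3 * r / 4"
    proof -
      have "\<bar>x' - x1\<bar> \<le> r / 2" using x'in win lpos unfolding abs_le_iff by linarith
      then have a1: "(x' - x1)\<^sup>2 \<le> (r/2)\<^sup>2"
        by (metis abs_le_square_iff abs_of_nonneg power2_abs less_imp_le rpos zero_le_divide_iff zero_le_numeral)
      have a2: "(Y - Y0)\<^sup>2 = (r/2)\<^sup>2" using Y by (auto simp: power2_eq_square)
      have "0 \<le> r * r" by simp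
      then have "(dist x' x1)\<^sup>2 + (dist Y Y0)\<^sup>2 \<le> (3 * r / 4)\<^sup>2"
        using a1 a2 unfolding dist_real_def power2_abs by (simp add: power2_eq_square field_simps; linarith)
      then have "sqrt ((dist x' x1)\<^sup>2 + (dist Y Y0)\<^sup>2) \<le> sqrt ((3 * r / 4)\<^sup>2)" by (rule real_sqrt_le_mono)
      then show ?thesis using rpos by (simp add: dist_Pair_Pair)
    qed
    have "dist (x1, Y0) p \<le> dist (x', Y) (x1, Y0) + dist (x', Y) p" by (rule dist_triangle3)
    then show "p \<in> ball (x1, Y0) r" using p d1 r lpos by (simp add: dist_commute)
    show "p \<notin> GG"
    proof
      assume "p \<in> GG"
      then obtain x where x: "x \<in> {0..1}" "p = (x, ff x)" by (auto simp: GG_mem)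
      have dp: "dist (x', Y) (x, ff x) < lam / 32" using p x by simp
      have "\<bar>x' - x\<bar> < lam / 32" using dist_pair_fst[where a=x' and b=Y and c=x and d="ff x"] dp by linarith
      then have "x' - x < lam / 32" "x - x' < lam / 32" unfolding abs_less_iff by linarith+
      then have xin: "x \<in> {u..v}" using x'in lpos by simp
      have "\<bar>Y - ff x\<bar> < lam / 32" using dist_pair_snd[where a=x' and b=Y and c=x and d="ff x"] dp by linarith
      have "\<bar>a\<bar> * \<bar>x - x'\<bar> \<le> \<bar>a\<bar> * (lam / 32)"
        using \<open>\<bar>x' - x\<bar> < lam / 32\<close> by (intro mult_left_mono) (auto simp: abs_minus_commute)
      then have "\<bar>a * x - a * x'\<bar> \<le> \<bar>a\<bar> * lam / 32" by (simp add: abs_mult flip: right_diff_distrib)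
      moreover have "\<bar>ff x - (a * x + b)\<bar> \<le> lam / 32" using aff xin by auto
      moreover have "\<bar>r\<bar> = r" using rpos by simp
      moreover have "\<bar>a * x' + b - Y\<bar> \<le> \<bar>a * x - a * x'\<bar> + \<bar>ff x - (a * x + b)\<bar> + \<bar>Y - ff x\<bar>"
        by arith
      moreover have "0 \<le> \<bar>a\<bar> * lam" using lpos by simp
      ultimately show False using big \<open>\<bar>Y - ff x\<bar> < lam / 32\<close> r lpos
        aux_lin2[of "\<bar>a\<bar> * lam" r "\<bar>a * x' + b - Y\<bar>" "\<bar>a * x - a * x'\<bar>" "\<bar>ff x - (a * x + b)\<bar>" "\<bar>Y - ff x\<bar>" lam]
        by argo
    qed
  qed
qed

lemma pw_mono: "n \<le> N \<Longrightarrow> pw n \<le> pw N"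
  by (simp add: pw_def power_increasing)

lemma pw_strict: "n < N \<Longrightarrow> pw n < pw N"
  by (simp add: pw_def power_strict_increasing)

lemma Qn_ratio: assumes "n \<le> N" shows "Qn n = 2^(pw N - pw n) * Qn N"
proof -
  have "(2::real)^(pw N) = 2^(pw N - pw n) * 2^(pw n)"
    using pw_mono[OF assms] by (simp flip: power_add)
  then show ?thesis by (simp add: Qn_def field_simps)
qed

definition kink :: "nat \<Rightarrow> real \<Rightarrow> bool" where
  "kink j y \<longleftrightarrow> (\<exists>m<NN j. y = cc j m \<or> y = cc j m - ee j \<or> y = cc j m + ee j)"

lemma kink_lower:
  assumes "j < J" "kink j y"
  shows "\<exists>i::int. y = of_int i * Ll J"
proof -
  obtain m where m: "m < NN j" "y = cc j m \<or> y = cc j m - ee j \<or> y = cc j m + ee j"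
    using assms(2) by (auto simp: kink_def)
  have "pw (3*j) < pw (3*J)" using assms(1) by (intro pw_strict) simp
  then obtain d where d: "pw (3*J) - pw (3*j) = Suc d" by (metis Suc_diff_Suc zero_less_diff)
  have Llj: "Ll j = 2^(Suc d) * Ll J" unfolding Ll_def using Qn_ratio[of "3*j" "3*J"] assms(1) d by simp
  have c: "cc j m = of_int ((2 * int m + 1) * 2^d) * Ll J"
    by (simp add: cc_def Llj field_simps)
  have "3*j+2 \<le> 3*J" using assms(1) by simp
  then have e: "ee j = of_int (2^(pw (3*J) - pw (3*j+2))) * Ll J"
    unfolding ee_def Ll_def using Qn_ratio[of "3*j+2" "3*J"] by simp
  show ?thesis
  proof (cases "y = cc j m")
    case True then show ?thesis using c by blast
  next
    case False
    then have "y = cc j m - ee j \<or> y = cc j m + ee j" using m by auto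
    then show ?thesis
    proof
      assume "y = cc j m - ee j"
      then have "y = of_int ((2 * int m + 1) * 2^d - 2^(pw (3*J) - pw (3*j+2))) * Ll J"
        using c e by (simp add: algebra_simps)
      then show ?thesis by blast
    next
      assume "y = cc j m + ee j"
      then have "y = of_int ((2 * int m + 1) * 2^d + 2^(pw (3*J) - pw (3*j+2))) * Ll J"
        using c e by (simp add: algebra_simps)
      then show ?thesis by blast
    qed
  qed
qed

lemma tent_affine:
  assumes "0 < e" "c \<notin> {p..q}" "c - e \<notin> {p..q}" "c + e \<notin> {p..q}"
  shows "\<exists>\<alpha> \<beta>. \<forall>x\<in>{p..q}. tent c e M x = \<alpha> * x + \<beta>"
proof (cases "c < p")
  case True
  show ?thesis
  proof (cases "c + e < p")
    case True
    have "\<forall>x\<in>{p..q}. tent c e M x = 0 * x + 0"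
    proof
      fix x assume x: "x \<in> {p..q}"
      then have "\<bar>x - c\<bar> = x - c" using \<open>c < p\<close> by auto
      moreover have "e - (x - c) \<le> 0" using x True by auto
      ultimately show "tent c e M x = 0 * x + 0" by (simp add: tent_def)
    qed
    then show ?thesis by blast
  next
    case False
    then have q: "q < c + e" using assms(4) by auto
    have "\<forall>x\<in>{p..q}. tent c e M x = (-M) * x + M * (e + c)"
    proof
      fix x assume x: "x \<in> {p..q}"
      then have "\<bar>x - c\<bar> = x - c" using \<open>c < p\<close> by auto
      moreover have "0 \<le> e - (x - c)" using x q by auto
      ultimately show "tent c e M x = (-M) * x + M * (e + c)" by (simp add: tent_def algebra_simps)
    qed
    then show ?thesis by blast
  qed
next
  case False
  then have qc: "q < c" using assms(2) by auto
  show ?thesis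
  proof (cases "q < c - e")
    case True
    have "\<forall>x\<in>{p..q}. tent c e M x = 0 * x + 0"
    proof
      fix x assume x: "x \<in> {p..q}"
      then have "\<bar>x - c\<bar> = c - x" using qc by auto
      moreover have "e - (c - x) \<le> 0" using x True by auto
      ultimately show "tent c e M x = 0 * x + 0" by (simp add: tent_def)
    qed
    then show ?thesis by blast
  next
    case False
    then have p: "c - e < p" using assms(3) by auto
    have "\<forall>x\<in>{p..q}. tent c e M x = M * x + M * (e - c)"
    proof
      fix x assume x: "x \<in> {p..q}"
      then have "\<bar>x - c\<bar> = c - x" using qc by auto
      moreover have "0 \<le> e - (c - x)" using x p by auto
      ultimately show "tent c e M x = M * x + M * (e - c)" by (simp add: tent_def algebra_simps)
    qed
    then show ?thesis by blast
  qed
qed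

lemma affine_sum:
  assumes "finite S" "\<And>i. i \<in> S \<Longrightarrow> \<exists>\<alpha> \<beta>. \<forall>x\<in>A. g i x = \<alpha> * x + \<beta>"
  shows "\<exists>\<alpha> \<beta>. \<forall>x\<in>A. (\<Sum>i\<in>S. g i x) = \<alpha> * x + (\<beta>::real)"
  using assms
proof (induction S rule: finite_induct)
  case empty
  then show ?case by (intro exI[of _ 0]) simp
next
  case (insert i S)
  obtain a1 b1 where 1: "\<forall>x\<in>A. g i x = a1 * x + b1" using insert.prems by blast
  obtain a2 b2 where 2: "\<forall>x\<in>A. (\<Sum>i\<in>S. g i x) = a2 * x + b2" using insert.IH insert.prems by blast
  have "\<forall>x\<in>A. (\<Sum>i\<in>insert i S. g i x) = (a1 + a2) * x + (b1 + b2)"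
    using 1 2 insert.hyps by (simp add: algebra_simps)
  then show ?case by blast
qed

lemma fj_affine:
  assumes "\<forall>y. kink j y \<longrightarrow> y \<notin> {p..q}"
  shows "\<exists>\<alpha> \<beta>. \<forall>x\<in>{p..q}. fj j x = \<alpha> * x + \<beta>"
  unfolding fj_def
proof (rule affine_sum)
  fix m assume "m \<in> {..<NN j}"
  then have "kink j (cc j m)" "kink j (cc j m - ee j)" "kink j (cc j m + ee j)" by (auto simp: kink_def)
  then show "\<exists>\<alpha> \<beta>. \<forall>x\<in>{p..q}. tent (cc j m) (ee j) (hh j / ee j) x = \<alpha> * x + \<beta>"
    using assms by (intro tent_affine ee_pos) auto
qed simp

lemma head_affine:
  assumes "\<forall>j<K. \<forall>y. kink j y \<longrightarrow> y \<notin> {p..q}"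
  shows "\<exists>\<alpha> \<beta>. \<forall>x\<in>{p..q}. (\<Sum>j<K. fj j x) = \<alpha> * x + \<beta>"
  by (rule affine_sum) (use assms fj_affine in auto)

lemma window_kinks:
  assumes l: "0 < ell" "8 * ell \<le> Ll J" and j: "j \<le> J" and k: "kink j y" and yw: "w \<le> y" "y \<le> w + ell"
  defines "m0 \<equiv> \<lfloor>w / Ll J\<rfloor>"
  shows "y \<in> {of_int m0 * Ll J, (of_int m0 + 1) * Ll J, (of_int m0 + 1/2) * Ll J - ee J,
               (of_int m0 + 1/2) * Ll J, (of_int m0 + 1/2) * Ll J + ee J}"
proof -
  let ?L = "Ll J"
  have L: "0 < ?L" by (rule Ll_pos)
  have fl: "of_int m0 * ?L \<le> w" "w < (of_int m0 + 1) * ?L"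
  proof -
    have "of_int m0 \<le> w / ?L" "w / ?L < of_int m0 + 1" unfolding m0_def by linarith+
    then show "of_int m0 * ?L \<le> w" "w < (of_int m0 + 1) * ?L" using L by (simp_all add: field_simps)
  qed
  have e16: "ee J \<le> ?L / 16" by (rule ee_le16)
  show ?thesis
  proof (cases "j < J")
    case True
    then obtain i where i: "y = of_int i * ?L" using kink_lower k by blast
    have "of_int m0 * ?L \<le> of_int i * ?L" using fl yw i by linarith
    then have "m0 \<le> i" using L by (simp add: mult_le_cancel_right)
    have "of_int i * ?L < (of_int m0 + 2) * ?L" using fl yw i l by (simp add: algebra_simps)
    then have "i < m0 + 2" using L mult_less_cancel_right_pos by fastforce
    then have "i = m0 \<or> i = m0 + 1" using \<open>m0 \<le> i\<close> by linarith
    then show ?thesis using i by auto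
  next
    case False
    then have jJ: "j = J" using j by simp
    obtain m where m: "m < NN J" "y = cc J m \<or> y = cc J m - ee J \<or> y = cc J m + ee J"
      using k jJ by (auto simp: kink_def)
    have cm: "cc J m = (of_int (int m) + 1/2) * ?L" by (simp add: cc_def)
    have y1: "cc J m - ee J \<le> y" "y \<le> cc J m + ee J" using m(2) ee_pos[of J] by auto
    have "of_int m0 * ?L \<le> (of_int (int m) + 1/2) * ?L + ?L / 16" using fl yw y1 e16 cm by linarith
    then have "of_int m0 * ?L \<le> (of_int (int m) + 1/2 + 1/16) * ?L" by (simp add: algebra_simps)
    then have "(of_int m0::real) \<le> of_int (int m) + 1/2 + 1/16" using L mult_le_cancel_right_pos by blast
    then have a: "m0 \<le> int m" by linarith
    have "(of_int (int m) + 1/2) * ?L - ?L / 16 < (of_int m0 + 1) * ?L + ?L / 8" using fl yw y1 e16 cm l by linarith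
    then have "(of_int (int m) + 1/2 - 1/16) * ?L < (of_int m0 + 1 + 1/8) * ?L" by (simp add: algebra_simps)
    then have "(of_int (int m)::real) + 1/2 - 1/16 < of_int m0 + 1 + 1/8" using L mult_less_cancel_right_pos by blast
    then have "int m \<le> m0" by linarith
    with a have "int m = m0" by simp
    then have "cc J m = (of_int m0 + 1/2) * ?L" using cm by simp
    then show ?thesis using m(2) by auto
  qed
qed

lemma pigeon6:
  fixes P :: "real set"
  assumes "finite P" "card P \<le> 5" "0 < ell"
  shows "\<exists>i<(6::nat). \<forall>p\<in>P. \<not> (w + real i * ell / 6 + ell / 24 \<le> p \<and> p \<le> w + (real i + 1) * ell / 6 - ell / 24)"
proof (rule ccontr)
  assume "\<not> ?thesis"
  then have "\<forall>i<(6::nat). \<exists>p\<in>P. w + real i * ell / 6 + ell / 24 \<le> p \<and> p \<le> w + (real i + 1) * ell / 6 - ell / 24"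
    by blast
  then obtain f where f: "\<And>i. i < 6 \<Longrightarrow> f i \<in> P \<and> w + real i * ell / 6 + ell / 24 \<le> f i \<and> f i \<le> w + (real i + 1) * ell / 6 - ell / 24"
    by metis
  have inj: "inj_on f {..<6}"
  proof (rule inj_onI)
    fix i i' assume ii: "i \<in> {..<6}" "i' \<in> {..<(6::nat)}" "f i = f i'"
    have "real i * ell < (real i' + 1) * ell" using f[of i] f[of i'] ii assms(3) by (auto simp: field_simps)
    then have "real i < real i' + 1" using assms(3) by (simp add: mult_less_cancel_right_pos)
    moreover have "real i' * ell < (real i + 1) * ell" using f[of i] f[of i'] ii assms(3) by (auto simp: field_simps)
    then have "real i' < real i + 1" using assms(3) by (simp add: mult_less_cancel_right_pos)
    ultimately show "i = i'" by linarith
  qed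
  have "card {..<(6::nat)} \<le> card P"
    by (rule card_inj_on_le[OF inj _ assms(1)]) (use f in auto)
  then show False using assms(2) by simp
qed

lemma hh0: "hh 0 = 1 / 2^64" by (simp add: hh_def Qn_def pw_def)
lemma Ll0: "Ll 0 = 1 / 65536" by (simp add: Ll_def Qn_def pw_def)

lemma free_interval:
  assumes w: "0 \<le> w" "w + ell \<le> 1" and l: "0 < ell"
  shows "\<exists>u v a b. w \<le> u \<and> v \<le> w + ell \<and> v - u = ell / 12 \<and>
           (\<forall>x\<in>{u..v}. \<bar>ff x - (a * x + b)\<bar> \<le> (ell / 12) / 32)"
proof (cases "Ll 0 < 8 * ell")
  case True
  have "2 * hh 0 \<le> (ell / 12) / 32" using True by (simp add: hh0 Ll0)
  then have "\<forall>x\<in>{w..w + ell/12}. \<bar>ff x - (0 * x + 0)\<bar> \<le> (ell / 12) / 32"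
    using ff_nonneg ff_le by (smt (verit) abs_le_iff mult_zero_left)
  then show ?thesis using l by (intro exI[of _ w] exI[of _ "w + ell/12"] exI[of _ 0]) auto
next
  case False
  obtain K where K: "Ll K < 8 * ell" using Ll_small[of "8*ell"] l by auto
  define n0 where "n0 = (LEAST n. Ll n < 8 * ell)"
  have n0: "Ll n0 < 8 * ell" unfolding n0_def by (rule LeastI[of _ K]) (rule K)
  have "n0 \<noteq> 0" proof assume "n0 = 0" then show False using n0 False by simp qed
  then obtain J where J: "n0 = Suc J" by (cases n0) auto
  have LJ: "8 * ell \<le> Ll J"
  proof (rule ccontr)
    assume "\<not> 8 * ell \<le> Ll J"
    then have "n0 \<le> J" unfolding n0_def by (intro Least_le) simp
    then show False using J by simp
  qed
  have LSJ: "Ll (Suc J) < 8 * ell" using n0 J by simp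
  define m0 where "m0 = \<lfloor>w / Ll J\<rfloor>"
  define P where "P = set [of_int m0 * Ll J, (of_int m0 + 1) * Ll J, (of_int m0 + 1/2) * Ll J - ee J,
               (of_int m0 + 1/2) * Ll J, (of_int m0 + 1/2) * Ll J + ee J]"
  have "card P \<le> 5" unfolding P_def using List.card_length[of "[of_int m0 * Ll J, (of_int m0 + 1) * Ll J, (of_int m0 + 1/2) * Ll J - ee J,
               (of_int m0 + 1/2) * Ll J, (of_int m0 + 1/2) * Ll J + ee J]"] by simp
  then obtain i where i: "i < (6::nat)"
    and free: "\<forall>p\<in>P. \<not> (w + real i * ell / 6 + ell / 24 \<le> p \<and> p \<le> w + (real i + 1) * ell / 6 - ell / 24)"
    using pigeon6[of P ell w] l by (auto simp: P_def)
  define u where "u = w + real i * ell / 6 + ell / 24"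
  define v where "v = w + (real i + 1) * ell / 6 - ell / 24"
  have iv: "real i \<le> 5" using i by simp
  have uw: "w \<le> u" "v \<le> w + ell" "v - u = ell / 12" using l iv by (auto simp: u_def v_def field_simps)
  have nok: "\<forall>j<Suc J. \<forall>y. kink j y \<longrightarrow> y \<notin> {u..v}"
  proof (intro allI impI)
    fix j y assume j: "j < Suc J" and k: "kink j y"
    show "y \<notin> {u..v}"
    proof
      assume y: "y \<in> {u..v}"
      then have "w \<le> y" "y \<le> w + ell" using uw by auto
      then have "y \<in> P" using window_kinks[OF l LJ _ k] j unfolding P_def m0_def by auto
      then show False using free y by (auto simp: u_def v_def)
    qed
  qed
  obtain a b where ab: "\<forall>x\<in>{u..v}. (\<Sum>j<Suc J. fj j x) = a * x + b"
    using head_affine[OF nok] by blast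
  have hs: "2 * hh (Suc J) \<le> (ell / 12) / 32"
  proof -
    have "hh (Suc J) \<le> Ll (Suc J) / 2^48" by (rule hh_le)
    also have "\<dots> \<le> 8 * ell / 2^48" using LSJ by (intro divide_right_mono) auto
    finally have "hh (Suc J) * 35184372088832 \<le> ell" by simp
    moreover have "0 \<le> hh (Suc J)" using hh_pos[of "Suc J"] by simp
    ultimately show ?thesis by simp
  qed
  have "\<forall>x\<in>{u..v}. \<bar>ff x - (a * x + b)\<bar> \<le> (ell / 12) / 32"
  proof
    fix x assume x: "x \<in> {u..v}"
    have "ff x - (a * x + b) = tl_f (Suc J) x" using ff_split[of x "Suc J"] ab x by simp
    then show "\<bar>ff x - (a * x + b)\<bar> \<le> (ell / 12) / 32" using tl_f_bounds[of "Suc J" x] hs by simp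
  qed
  then show ?thesis using uw by blast
qed

lemma diam_GG: "diameter GG \<le> 2"
proof (rule diameter_le)
  fix p q assume "p \<in> GG" "q \<in> GG"
  then obtain x y where x: "x \<in> {0..1}" "p = (x, ff x)" and y: "y \<in> {0..1}" "q = (y, ff y)" by (auto simp: GG_mem)
  have h: "2 * hh 0 \<le> 1" by (simp add: hh0)
  have "norm (p - q) \<le> norm (x - y) + norm (ff x - ff y)" using x y norm_Pair_le[of "x - y" "ff x - ff y"] by simp
  also have "\<dots> \<le> 1 + 1" using x y ff_nonneg[of x] ff_nonneg[of y] ff_le[of x] ff_le[of y] h by auto
  finally show "norm (p - q) \<le> 2" by simp
qed simp

theorem GG_porous: "strongly_porous GG"
  unfolding strongly_porous_def
proof (intro exI[of _ "1/1536"] conjI allI impI)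
  fix x :: "real \<times> real" and r :: real
  assume r: "0 < r \<and> r < diameter GG"
  then have r2: "r < 2" using diam_GG by linarith
  show "\<exists>y. ball y (1/1536 * r) \<subseteq> ball x r - GG"
  proof (cases "\<forall>g\<in>GG. r / 2 \<le> dist x g")
    case True
    have "ball x (1/1536 * r) \<subseteq> ball x r - GG"
    proof
      fix z assume "z \<in> ball x (1/1536 * r)"
      then have "dist x z < r / 2" "dist x z < r" using r by auto
      then show "z \<in> ball x r - GG" using True by force
    qed
    then show ?thesis by blast
  next
    case False
    then obtain g where g: "g \<in> GG" "dist x g < r / 2" by force
    then obtain x1 where x1: "x1 \<in> {0..1}" "g = (x1, ff x1)" by (auto simp: GG_mem)
    define \<rho> where "\<rho> = r / 2"
    define ell where "ell = \<rho> / 2"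
    have ell: "0 < ell" "ell < 1/2" using r r2 by (auto simp: ell_def \<rho>_def)
    define w where "w = (if x1 + ell \<le> 1 then x1 else x1 - ell)"
    have w: "0 \<le> w" "w + ell \<le> 1" "x1 - ell \<le> w" "w + ell \<le> x1 + ell"
      using x1 ell by (auto simp: w_def)
    obtain u v a b where uv: "w \<le> u" "v \<le> w + ell" "v - u = ell / 12"
      and aff: "\<forall>x\<in>{u..v}. \<bar>ff x - (a * x + b)\<bar> \<le> (ell / 12) / 32"
      using free_interval[OF w(1,2) ell(1)] by blast
    have "\<exists>y. ball y ((ell/12) / 32) \<subseteq> ball (x1, ff x1) \<rho> - GG"
    proof (rule hole[where a=a and b=b])
      show "0 \<le> u" using uv w by linarith
      show "v \<le> 1" using uv w by linarith
      show "u < v" using uv ell by linarith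
      show "ell / 12 = v - u" using uv by simp
      show "ell / 12 \<le> \<rho>" using ell by (simp add: ell_def)
      show "x1 - \<rho> / 2 \<le> u" using uv w by (simp add: ell_def)
      show "v \<le> x1 + \<rho> / 2" using uv w by (simp add: ell_def)
      show "\<forall>x\<in>{u..v}. \<bar>ff x - (a * x + b)\<bar> \<le> ell / 12 / 32" by (rule aff)
    qed
    then obtain y where y: "ball y ((ell/12) / 32) \<subseteq> ball (x1, ff x1) \<rho> - GG" by blast
    have "ball (x1, ff x1) \<rho> \<subseteq> ball x r"
    proof
      fix z assume "z \<in> ball (x1, ff x1) \<rho>"
      then have "dist g z < r / 2" using x1 by (simp add: \<rho>_def)
      then show "z \<in> ball x r" using g(2) dist_triangle[of x z g] by simp
    qed
    moreover have eq: "(ell/12) / 32 = 1/1536 * r" by (simp add: ell_def \<rho>_def)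
    ultimately have "ball y (1/1536 * r) \<subseteq> ball x r - GG" using y by (simp only: eq[symmetric]) blast
    then show ?thesis by blast
  qed
qed simp

inductive reach :: "(real \<times> real) set \<Rightarrow> real \<Rightarrow> real \<times> real \<Rightarrow> real \<times> real \<Rightarrow> bool"
  for S s where
  rrefl: "P \<in> S \<Longrightarrow> reach S s P P"
| rstep: "reach S s P Q \<Longrightarrow> R \<in> S \<Longrightarrow> dist Q R \<le> s \<Longrightarrow> reach S s P R"

lemma reach_mono: "reach S s P Q \<Longrightarrow> S \<subseteq> T \<Longrightarrow> reach T s P Q"
  by (induction rule: reach.induct) (auto intro: reach.intros)

lemma reach_in: "reach S s P Q \<Longrightarrow> P \<in> S \<and> Q \<in> S"
  by (induction rule: reach.induct) auto

lemma reach_trans: "reach S s Q R \<Longrightarrow> reach S s P Q \<Longrightarrow> reach S s P R"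
  by (induction rule: reach.induct) (auto intro: reach.intros)

lemma reach_prepend: "reach S s Q R \<Longrightarrow> P \<in> S \<Longrightarrow> dist P Q \<le> s \<Longrightarrow> reach S s P R"
  by (induction rule: reach.induct) (auto intro: reach.intros)

lemma reach_sym: "reach S s P Q \<Longrightarrow> reach S s Q P"
proof (induction rule: reach.induct)
  case (rrefl P) then show ?case by (rule reach.rrefl)
next
  case (rstep P Q R)
  then show ?case using reach_prepend[OF rstep.IH rstep.hyps(2)] by (simp add: dist_commute)
qed

definition gr :: "real \<Rightarrow> real \<times> real" where "gr x = (x, ff x)"

lemma dist_gr: "dist (gr x) (gr y) \<le> \<bar>x - y\<bar> + \<bar>ff x - ff y\<bar>"
proof -
  have "dist (gr x) (gr y) = norm (x - y, ff x - ff y)" by (simp add: gr_def dist_norm)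
  also have "\<dots> \<le> norm (x - y) + norm (ff x - ff y)" by (rule norm_Pair_le)
  finally show ?thesis by simp
qed

lemma reach_graph:
  assumes "u \<le> v" "0 < s"
  shows "reach (gr ` {u..v}) s (gr u) (gr v)"
proof -
  obtain d where d: "0 < d" "\<forall>x y. \<bar>x - y\<bar> \<le> d \<longrightarrow> \<bar>ff x - ff y\<bar> \<le> s / 2"
    using ff_unif[of "s/2"] assms by auto
  define d' where "d' = min d (s/2)"
  have d': "0 < d'" using d assms by (simp add: d'_def)
  have step: "dist (gr x) (gr y) \<le> s" if "\<bar>x - y\<bar> \<le> d'" for x y
  proof -
    have "\<bar>ff x - ff y\<bar> \<le> s / 2" using d that by (simp add: d'_def)
    moreover have "\<bar>x - y\<bar> \<le> s / 2" using that by (simp add: d'_def)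
    ultimately show ?thesis using dist_gr[of x y] by linarith
  qed
  have main: "\<forall>v. u \<le> v \<and> v \<le> u + real n * d' \<longrightarrow> reach (gr ` {u..v}) s (gr u) (gr v)" for n
  proof (induction n)
    case 0
    then show ?case by (auto intro: reach.rrefl)
  next
    case (Suc n)
    show ?case
    proof (intro allI impI)
      fix v assume v: "u \<le> v \<and> v \<le> u + real (Suc n) * d'"
      show "reach (gr ` {u..v}) s (gr u) (gr v)"
      proof (cases "v \<le> u + real n * d'")
        case True then show ?thesis using Suc v by blast
      next
        case False
        define v' where "v' = max u (v - d')"
        have v': "u \<le> v'" "v' \<le> u + real n * d'" "v' \<le> v" "\<bar>v' - v\<bar> \<le> d'"
          using v False d' by (auto simp: v'_def algebra_simps)
        have "reach (gr ` {u..v'}) s (gr u) (gr v')" using Suc v' by blast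
        then have "reach (gr ` {u..v}) s (gr u) (gr v')" by (rule reach_mono) (use v' in auto)
        then show ?thesis
          by (rule reach.rstep) (use v step[OF v'(4)] in auto)
      qed
    qed
  qed
  obtain n where "(v - u) / d' \<le> real n" using real_arch_simple by blast
  then have "v \<le> u + real n * d'" using d' by (simp add: field_simps)
  then show ?thesis using main assms by blast
qed

definition btw :: "('a \<times> 'a) set \<Rightarrow> 'a \<Rightarrow> 'a \<Rightarrow> 'a \<Rightarrow> bool" where
  "btw R p z q \<longleftrightarrow> ((p, z) \<in> R \<and> p \<noteq> z \<and> (z, q) \<in> R \<and> z \<noteq> q) \<or> ((q, z) \<in> R \<and> q \<noteq> z \<and> (z, p) \<in> R \<and> z \<noteq> p)"

lemma lin_total: "linear_order_on A R \<Longrightarrow> x \<in> A \<Longrightarrow> y \<in> A \<Longrightarrow> x \<noteq> y \<Longrightarrow> (x, y) \<in> R \<or> (y, x) \<in> R"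
  by (auto simp: linear_order_on_def total_on_def)

lemma lin_antisym: "linear_order_on A R \<Longrightarrow> (x, y) \<in> R \<Longrightarrow> (y, x) \<in> R \<Longrightarrow> x = y"
  by (auto simp: linear_order_on_def partial_order_on_def antisym_def)

lemma lin_trans: "linear_order_on A R \<Longrightarrow> (x, y) \<in> R \<Longrightarrow> (y, z) \<in> R \<Longrightarrow> (x, z) \<in> R"
  by (auto simp: linear_order_on_def partial_order_on_def preorder_on_def trans_def)

lemma three_btw:
  assumes lin: "linear_order_on A R" and A: "x \<in> A" "y \<in> A" "w \<in> A"
    and d: "x \<noteq> y" "y \<noteq> w" "x \<noteq> w"
  shows "btw R x y w \<or> btw R y x w \<or> btw R x w y"
proof -
  have t1: "(x, y) \<in> R \<or> (y, x) \<in> R" using lin_total[OF lin A(1,2) d(1)] .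
  have t2: "(y, w) \<in> R \<or> (w, y) \<in> R" using lin_total[OF lin A(2,3) d(2)] .
  have t3: "(x, w) \<in> R \<or> (w, x) \<in> R" using lin_total[OF lin A(1,3) d(3)] .
  show ?thesis
  proof (cases "(x, y) \<in> R")
    case xy: True
    show ?thesis
    proof (cases "(y, w) \<in> R")
      case True then show ?thesis using xy d unfolding btw_def by blast
    next
      case False
      then have wy: "(w, y) \<in> R" using t2 by blast
      show ?thesis
      proof (cases "(x, w) \<in> R")
        case True then show ?thesis using wy d unfolding btw_def by blast
      next
        case False then have "(w, x) \<in> R" using t3 by blast
        then show ?thesis using xy d unfolding btw_def by blast
      qed
    qed
  next
    case False
    then have yx: "(y, x) \<in> R" using t1 by blast
    show ?thesis
    proof (cases "(x, w) \<in> R")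
      case True then show ?thesis using yx d unfolding btw_def by blast
    next
      case False
      then have wx: "(w, x) \<in> R" using t3 by blast
      show ?thesis
      proof (cases "(y, w) \<in> R")
        case True then show ?thesis using wx d unfolding btw_def by blast
      next
        case False then have "(w, y) \<in> R" using t2 by blast
        then show ?thesis using yx d unfolding btw_def by blast
      qed
    qed
  qed
qed

locale monodata =
  fixes A :: "(real \<times> real) set" and R and c :: real
  assumes lin: "linear_order_on A R" and cpos: "0 < c"
    and mon: "\<forall>x\<in>A. \<forall>y\<in>A. \<forall>z\<in>A. (x, y) \<in> R \<and> x \<noteq> y \<and> (y, z) \<in> R \<and> y \<noteq> z \<longrightarrow> dist x y \<le> c * dist x z"
begin

lemma btw_bound:
  assumes "p \<in> A" "z \<in> A" "q \<in> A" "btw R p z q"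
  shows "min (dist p z) (dist q z) \<le> c * dist p q"
proof -
  have "(p, z) \<in> R \<and> p \<noteq> z \<and> (z, q) \<in> R \<and> z \<noteq> q \<or> (q, z) \<in> R \<and> q \<noteq> z \<and> (z, p) \<in> R \<and> z \<noteq> p"
    using assms(4) by (simp add: btw_def)
  then show ?thesis
  proof
    assume "(p, z) \<in> R \<and> p \<noteq> z \<and> (z, q) \<in> R \<and> z \<noteq> q"
    then have "dist p z \<le> c * dist p q" using mon assms(1-3) by blast
    then show ?thesis by linarith
  next
    assume "(q, z) \<in> R \<and> q \<noteq> z \<and> (z, p) \<in> R \<and> z \<noteq> p"
    then have "dist q z \<le> c * dist q p" using mon assms(1-3) by blast
    then show ?thesis by (simp add: dist_commute)
  qed
qed

lemma claim:
  assumes eta: "0 < \<eta>" and zA: "z \<in> A" and Scl: "S \<subseteq> closure A"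
    and far: "\<forall>P\<in>S. c * (s + 2 * \<eta>) + \<eta> < dist P z"
    and r: "reach S s P Q"
  shows "\<forall>a\<in>A. dist a P < \<eta> \<longrightarrow> (\<exists>b\<in>A. dist b Q < \<eta> \<and> ((a, z) \<in> R \<longleftrightarrow> (b, z) \<in> R))"
  using r
proof (induction rule: reach.induct)
  case (rrefl P) then show ?case by blast
next
  case (rstep P Q R')
  show ?case
  proof (intro ballI impI)
    fix a assume a: "a \<in> A" "dist a P < \<eta>"
    then obtain b where b: "b \<in> A" "dist b Q < \<eta>" "(a, z) \<in> R \<longleftrightarrow> (b, z) \<in> R" using rstep.IH by blast
    have "R' \<in> closure A" using rstep.hyps(2) Scl by auto
    then obtain b' where b': "b' \<in> A" "dist b' R' < \<eta>" using eta by (auto simp: closure_approachable)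
    have Qin: "Q \<in> S" using reach_in[OF rstep.hyps(1)] by simp
    have s0: "0 \<le> s" using rstep.hyps(3) zero_le_dist order_trans by blast
    have dbz: "c * (s + 2 * \<eta>) < dist b z"
      using far Qin b(2) dist_triangle[of Q z b] by (auto simp: dist_commute)
    have db'z: "c * (s + 2 * \<eta>) < dist b' z"
      using far rstep.hyps(2) b'(2) dist_triangle[of R' z b'] by (auto simp: dist_commute)
    have c2: "0 \<le> c * (s + 2 * \<eta>)" using cpos s0 eta by simp
    have bz: "b \<noteq> z" "b' \<noteq> z" using dbz db'z c2 by auto
    have dbb: "dist b b' < s + 2 * \<eta>"
    proof -
      have "dist b b' \<le> dist b Q + dist Q b'" by (rule dist_triangle)
      moreover have "dist Q b' \<le> dist Q R' + dist R' b'" by (rule dist_triangle)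
      ultimately have "dist b b' \<le> dist b Q + dist Q R' + dist R' b'" by linarith
      then show ?thesis using b(2) b'(2) rstep.hyps(3) by (simp add: dist_commute)
    qed
    have "c * dist b b' < c * (s + 2 * \<eta>)" using dbb cpos by simp
    have "(b', z) \<in> R \<longleftrightarrow> (b, z) \<in> R"
    proof (rule ccontr)
      assume ne: "\<not> ?thesis"
      have tb: "(b, z) \<in> R \<or> (z, b) \<in> R" using lin_total[OF lin b(1) zA bz(1)] .
      have tb': "(b', z) \<in> R \<or> (z, b') \<in> R" using lin_total[OF lin b'(1) zA bz(2)] .
      have "btw R b z b'" using ne tb tb' bz unfolding btw_def by auto
      then have "min (dist b z) (dist b' z) \<le> c * dist b b'" using btw_bound b(1) zA b'(1) by blast
      then show False using dbz db'z \<open>c * dist b b' < c * (s + 2 * \<eta>)\<close> by linarith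
    qed
    then show "\<exists>b\<in>A. dist b R' < \<eta> \<and> ((a, z) \<in> R \<longleftrightarrow> (b, z) \<in> R)" using b b' by blast
  qed
qed

lemma middle_false:
  assumes eta: "0 < \<eta>" and zA: "z \<in> A" and Scl: "S \<subseteq> closure A"
    and far: "\<forall>P\<in>S. c * (s + 2 * \<eta>) + \<eta> < dist P z"
    and r: "reach S s P Q" and s0: "0 \<le> s"
    and p: "p \<in> A" "dist p P < \<eta>" and q: "q \<in> A" "dist q Q < \<eta>"
    and bt: "btw R p z q"
  shows False
proof -
  obtain b where b: "b \<in> A" "dist b Q < \<eta>" "(p, z) \<in> R \<longleftrightarrow> (b, z) \<in> R"
    using claim[OF eta zA Scl far r] p by blast
  have Qin: "Q \<in> S" using reach_in[OF r] by simp
  have c2: "0 \<le> c * (s + 2 * \<eta>)" using cpos s0 eta by simp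
  have dbz: "c * (s + 2 * \<eta>) < dist b z"
    using far Qin b(2) dist_triangle[of Q z b] by (auto simp: dist_commute)
  have dqz: "c * (s + 2 * \<eta>) < dist q z"
    using far Qin q(2) dist_triangle[of Q z q] by (auto simp: dist_commute)
  have bz: "b \<noteq> z" using dbz c2 by auto
  have "dist b q < 2 * \<eta>" using b(2) q(2) dist_triangle[of b q Q] by (simp add: dist_commute)
  then have "c * dist b q \<le> c * (s + 2 * \<eta>)" using cpos s0 by (intro mult_left_mono) auto
  have "btw R b z q"
  proof -
    have "(p, z) \<in> R \<and> p \<noteq> z \<and> (z, q) \<in> R \<and> z \<noteq> q \<or> (q, z) \<in> R \<and> q \<noteq> z \<and> (z, p) \<in> R \<and> z \<noteq> p"
      using bt by (simp add: btw_def)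
    then show ?thesis
    proof
      assume h: "(p, z) \<in> R \<and> p \<noteq> z \<and> (z, q) \<in> R \<and> z \<noteq> q"
      then have "(b, z) \<in> R" using b(3) by simp
      then show ?thesis using h bz by (simp add: btw_def)
    next
      assume h: "(q, z) \<in> R \<and> q \<noteq> z \<and> (z, p) \<in> R \<and> z \<noteq> p"
      then have "(p, z) \<notin> R" using lin_antisym[OF lin] by blast
      then have "(b, z) \<notin> R" using b(3) by simp
      then have "(z, b) \<in> R" using lin_total[OF lin b(1) zA bz] by simp
      then show ?thesis using h bz by (simp add: btw_def)
    qed
  qed
  then have "min (dist b z) (dist q z) \<le> c * dist b q" using btw_bound b(1) zA q(1) by blast
  then show False using dbz dqz \<open>c * dist b q \<le> c * (s + 2 * \<eta>)\<close> by linarith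
qed

end

lemma q_facts:
  fixes q c :: real
  assumes q: "0 < q" "q \<le> 1/65536" "q \<le> 1 / (60 * (c + 1))" and c: "0 < c"
  shows "q^5/5 \<le> q/2" "q^5/5 \<le> q"
    "q^5/5 \<le> q^4 - (1/q) * (q^5/5) - 2 * q^256"
    "2 * q^16 + (1/q) * (2 * q^16) + 2 * q^256 \<le> 6 * q^15"
    "2 * c * (6 * q^15) \<le> q^5/5"
    "0 < q^5/5" "0 < 6 * q^15"
proof -
  have q1: "q \<le> 1" using q by simp
  have p5: "q^5 \<le> q^1" using q q1 by (intro power_decreasing) auto
  then show "q^5/5 \<le> q/2" "q^5/5 \<le> q" using q by auto
  have e4: "q^5 = q^4 * q" by (simp add: eval_nat_numeral)
  have "q^4 * q \<le> q^4 * (1/65536)" using q by (intro mult_left_mono) auto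
  then have q5: "q^5 \<le> q^4 / 65536" using e4 by simp
  have q256: "q^256 \<le> q^5" using q q1 by (intro power_decreasing) auto
  have a: "(1/q) * (q^5/5) = q^4/5" using q by (simp add: e4)
  have "0 \<le> q^4" by simp
  then have "q^5/5 \<le> q^4 - q^4/5 - 2 * q^256" using q5 q256 by linarith
  then show "q^5/5 \<le> q^4 - (1/q) * (q^5/5) - 2 * q^256" using a by simp
  have e16: "q^16 = q^15 * q" by (simp add: eval_nat_numeral)
  have b: "(1/q) * (2 * q^16) = 2 * q^15" using q by (simp add: e16)
  have "q^16 \<le> q^15" using q q1 by (intro power_decreasing) auto
  moreover have "q^256 \<le> q^15" using q q1 by (intro power_decreasing) auto
  ultimately show "2 * q^16 + (1/q) * (2 * q^16) + 2 * q^256 \<le> 6 * q^15" using b by linarith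
  have e15: "q^15 = q^5 * q^10" by (simp flip: power_add)
  have "q^10 \<le> q^1" using q q1 by (intro power_decreasing) auto
  then have "q^10 \<le> 1 / (60 * (c + 1))" using q by simp
  then have "12 * c * q^10 \<le> 12 * c * (1 / (60 * (c + 1)))" using c by (intro mult_left_mono) auto
  also have "\<dots> \<le> 1/5" using c by (simp add: field_simps)
  finally have "12 * c * q^10 \<le> 1/5" .
  then have "q^5 * (12 * c * q^10) \<le> q^5 * (1/5)" using q by (intro mult_left_mono) auto
  moreover have "2 * c * (6 * q^15) = q^5 * (12 * c * q^10)" unfolding e15 by (simp add: mult_ac)
  ultimately show "2 * c * (6 * q^15) \<le> q^5/5" by linarith
  show "0 < q^5/5" "0 < 6 * q^15" using q by auto
qed

lemma ff_decomp: "ff x = (\<Sum>j<k. fj j x) + fj k x + tl_f (Suc k) x"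
  using ff_split[of x "Suc k"] by simp

lemma hh_Suc_pow: "hh (Suc k) = Ll k ^ 256"
  by (simp add: hh_eq Ll_Suc flip: power_mult)

lemma spike_config:
  assumes ab: "0 \<le> \<alpha>" "\<alpha> < \<beta>" "\<beta> \<le> 1" and c: "0 < c"
  shows "\<exists>a1 a2 a3 e D s. \<alpha> < a1 \<and> a1 < a2 \<and> a2 < a3 \<and> a3 < \<beta> \<and> 0 < e \<and> a1 \<le> a2 - e \<and> a2 + e \<le> a3 \<and>
     0 < D \<and> 0 < s \<and> 2 * c * s \<le> D \<and>
     (\<forall>x. e \<le> \<bar>x - a2\<bar> \<longrightarrow> D \<le> dist (gr x) (gr a2)) \<and>
     (\<forall>x. a2 \<le> x \<longrightarrow> D \<le> dist (gr x) (gr a1)) \<and>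
     (\<forall>x. x \<le> a2 \<longrightarrow> D \<le> dist (gr x) (gr a3)) \<and>
     dist (gr (a2 - e)) (gr (a2 + e)) \<le> s"
proof -
  obtain k where k: "Ll k < min ((\<beta> - \<alpha>) / 4) (1 / (60 * (c + 1)))"
    using Ll_small[of "min ((\<beta> - \<alpha>) / 4) (1 / (60 * (c + 1)))"] ab c by auto
  define q where "q = Ll k"
  have k1: "Ll k < (\<beta> - \<alpha>) / 4" "Ll k < 1 / (60 * (c + 1))" using k by simp_all
  have k2: "4 * Ll k < \<beta> - \<alpha>" using k1(1) by (simp add: field_simps)
  have q: "0 < q" "q \<le> 1/65536" "q \<le> 1 / (60 * (c + 1))" "4 * q < \<beta> - \<alpha>"
    unfolding q_def using k1 k2 Ll_pos[of k] Ll_le[of k] by linarith+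
  note qf = q_facts[OF q(1-3) c]
  define m1 where "m1 = nat \<lceil>\<alpha> / q\<rceil>"
  have m1: "\<alpha> \<le> real m1 * q" "real m1 * q < \<alpha> + q"
  proof -
    have "0 \<le> \<alpha> / q" using ab q(1) by simp
    then have "-1 < \<alpha> / q" by linarith
    then have c0: "0 \<le> \<lceil>\<alpha> / q\<rceil>" by (simp add: zero_le_ceiling)
    then have rm: "real m1 = of_int \<lceil>\<alpha> / q\<rceil>" unfolding m1_def by simp
    have "\<alpha> / q \<le> real m1" "real m1 < \<alpha> / q + 1" unfolding rm by linarith+
    then show "\<alpha> \<le> real m1 * q" "real m1 * q < \<alpha> + q" using q(1) by (simp_all add: field_simps)
  qed
  define a1 where "a1 = cc k m1"
  define a2 where "a2 = cc k (m1 + 1)"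
  define a3 where "a3 = cc k (m1 + 2)"
  have a: "a1 = (real m1 + 1/2) * q" "a2 = (real m1 + 3/2) * q" "a3 = (real m1 + 5/2) * q"
    by (simp_all add: a1_def a2_def a3_def cc_def q_def field_simps)
  have d12: "a2 = a1 + q" "a3 = a2 + q" using a by (simp_all add: algebra_simps)
  have ord: "\<alpha> < a1" "a1 < a2" "a2 < a3" "a3 < \<beta>" using a m1 q by (auto simp: field_simps)
  have m1N: "m1 + 1 < NN k"
  proof -
    have "(real (m1 + 1)) * q < 1" using a ord ab q(1) by (simp add: field_simps)
    then have "real (m1 + 1) < 1 / q" using q(1) by (simp add: field_simps)
    then have "real (m1 + 1) < real (NN k)" by (simp add: NN_eq q_def)
    then show ?thesis by (simp only: of_nat_less_iff)
  qed
  define e where "e = ee k"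
  have e: "e = q^16" by (simp add: e_def ee_eq q_def)
  define D where "D = q^5/5"
  define s where "s = 6 * q^15"
  have hk: "hh k = q^4" by (simp add: hh_eq q_def)
  have hS: "hh (Suc k) = q^256" by (simp add: hh_Suc_pow q_def)
  have a2c: "a2 = cc k (m1 + 1)" by (simp add: a2_def)
  have fc: "fj k a2 = hh k" using fj_center[OF m1N] a2c by simp
  have eq: "e \<le> q / 16" using ee_le16[of k] by (simp add: e_def q_def)
  have fo: "fj k x = 0" if "e \<le> \<bar>x - a2\<bar>" "\<bar>x - a2\<bar> \<le> q / 2" for x
    using fj_off_center[OF m1N, of x] that a2c by (simp add: e_def q_def)
  have hl: "\<bar>(\<Sum>j<k. fj j x) - (\<Sum>j<k. fj j y)\<bar> \<le> \<bar>x - y\<bar> / q" for x y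
    using head_lip2[where K=k and x=x and y=y] by (simp add: q_def)
  have tb: "0 \<le> tl_f (Suc k) x" "tl_f (Suc k) x \<le> 2 * q^256" for x
    using tl_f_bounds[of "Suc k" x] hS by auto
  have F1: "\<forall>x. e \<le> \<bar>x - a2\<bar> \<longrightarrow> D \<le> dist (gr x) (gr a2)"
  proof (intro allI impI)
    fix x assume xe: "e \<le> \<bar>x - a2\<bar>"
    show "D \<le> dist (gr x) (gr a2)"
    proof (cases "D \<le> \<bar>x - a2\<bar>")
      case True
      then show ?thesis using dist_pair_fst[where a=x and b="ff x" and c=a2 and d="ff a2"] by (simp add: gr_def)
    next
      case False
      then have xd: "\<bar>x - a2\<bar> < D" by simp
      then have "\<bar>x - a2\<bar> \<le> q / 2" using qf(1) by (simp add: D_def)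
      then have f0: "fj k x = 0" using fo xe by simp
      have "\<bar>x - a2\<bar> / q \<le> D / q" using xd q(1) by (simp add: divide_right_mono)
      then have "\<bar>(\<Sum>j<k. fj j a2) - (\<Sum>j<k. fj j x)\<bar> \<le> (1/q) * (q^5/5)"
        using hl[of a2 x] by (simp add: D_def abs_minus_commute)
      then have "ff a2 - ff x \<ge> q^4 - (1/q) * (q^5/5) - 2 * q^256"
        using ff_decomp[of a2 k] ff_decomp[of x k] fc f0 hk tb[of a2] tb[of x] by linarith
      then have "D \<le> ff a2 - ff x" using qf(3) unfolding D_def by linarith
      then have "D \<le> \<bar>ff x - ff a2\<bar>" by linarith
      then show ?thesis using dist_pair_snd[where a=x and b="ff x" and c=a2 and d="ff a2"] by (simp add: gr_def)
    qed
  qed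
  have F2: "\<forall>x. a2 \<le> x \<longrightarrow> D \<le> dist (gr x) (gr a1)"
  proof (intro allI impI)
    fix x assume "a2 \<le> x"
    then have "q \<le> \<bar>x - a1\<bar>" using d12 by linarith
    then show "D \<le> dist (gr x) (gr a1)" using qf(2) dist_pair_fst[where a=x and b="ff x" and c=a1 and d="ff a1"]
      by (simp add: gr_def D_def)
  qed
  have F3: "\<forall>x. x \<le> a2 \<longrightarrow> D \<le> dist (gr x) (gr a3)"
  proof (intro allI impI)
    fix x assume "x \<le> a2"
    then have "q \<le> \<bar>x - a3\<bar>" using d12 by linarith
    then show "D \<le> dist (gr x) (gr a3)" using qf(2) dist_pair_fst[where a=x and b="ff x" and c=a3 and d="ff a3"]
      by (simp add: gr_def D_def)
  qed
  have ep: "0 < e" using q(1) by (simp add: e)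
  have F4: "dist (gr (a2 - e)) (gr (a2 + e)) \<le> s"
  proof -
    have eq2: "e \<le> q / 2" using eq q(1) by simp
    have f1: "fj k (a2 - e) = 0" "fj k (a2 + e) = 0" using fo[of "a2 - e"] fo[of "a2 + e"] ep eq2 by auto
    have "\<bar>(\<Sum>j<k. fj j (a2 - e)) - (\<Sum>j<k. fj j (a2 + e))\<bar> \<le> (1/q) * (2 * q^16)"
      using hl[of "a2 - e" "a2 + e"] ep by (simp add: e)
    then have "\<bar>ff (a2 - e) - ff (a2 + e)\<bar> \<le> (1/q) * (2 * q^16) + 2 * q^256"
      using ff_decomp[of "a2 - e" k] ff_decomp[of "a2 + e" k] f1 tb[of "a2 - e"] tb[of "a2 + e"] by linarith
    moreover have "\<bar>(a2 - e) - (a2 + e)\<bar> = 2 * q^16" using ep by (simp add: e)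
    ultimately show ?thesis using dist_gr[of "a2 - e" "a2 + e"] qf(4) by (simp add: s_def)
  qed
  have "a1 \<le> a2 - e" "a2 + e \<le> a3" using d12 eq q(1) by linarith+
  moreover have Dp: "0 < D" "0 < s" "2 * c * s \<le> D" using qf(5,6,7) by (simp_all only: D_def s_def)
  ultimately show ?thesis
    using ord ep F1 F2 F3 F4 by blast
qed

lemma GG_gr: "GG = gr ` {0..1}" by (auto simp: GG_def graph_on_def gr_def)

lemma mono_nd:
  assumes AG: "A \<subseteq> GG" and mA: "monotone_space A"
  shows "nowhere_dense_in A GG"
  unfolding nowhere_dense_in_def
proof (rule ccontr)
  assume "(subtopology euclidean GG) interior_of ((subtopology euclidean GG) closure_of A) \<noteq> {}"
  then obtain g0 W where W: "openin (subtopology euclidean GG) W" "g0 \<in> W"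
    "W \<subseteq> (subtopology euclidean GG) closure_of A"
    by (auto simp: interior_of_def)
  have clo: "(subtopology euclidean GG) closure_of A \<subseteq> closure A"
    using closure_of_subtopology_subset[of euclidean GG A] by simp
  obtain T where T: "open T" "W = T \<inter> GG" using W(1) by (auto simp: openin_subtopology)
  have g0: "g0 \<in> T" "g0 \<in> GG" using W(2) T(2) by auto
  obtain \<rho> where rho: "0 < \<rho>" "ball g0 \<rho> \<subseteq> T" using T(1) g0(1) open_contains_ball by blast
  obtain x0 where x0: "x0 \<in> {0..1}" "g0 = gr x0" using g0(2) by (auto simp: GG_gr)
  have incl: "gr x \<in> closure A" if "x \<in> {0..1}" "dist (gr x) g0 < \<rho>" for x
  proof -
    have "gr x \<in> W" using that rho T(2) by (auto simp: GG_gr dist_commute)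
    then show ?thesis using W(3) clo by auto
  qed
  obtain \<delta> where d: "0 < \<delta>" "\<forall>x y. \<bar>x - y\<bar> \<le> \<delta> \<longrightarrow> \<bar>ff x - ff y\<bar> \<le> \<rho> / 3"
    using ff_unif[of "\<rho>/3"] rho(1) by auto
  define \<delta>' where "\<delta>' = min \<delta> (\<rho> / 3)"
  have d': "0 < \<delta>'" using d rho by (simp add: \<delta>'_def)
  define \<alpha> where "\<alpha> = max 0 (x0 - \<delta>'/2)"
  define \<beta> where "\<beta> = min 1 (x0 + \<delta>'/2)"
  have ab: "0 \<le> \<alpha>" "\<alpha> < \<beta>" "\<beta> \<le> 1" using x0 d' by (auto simp: \<alpha>_def \<beta>_def)
  have inclI: "gr x \<in> closure A" if "\<alpha> \<le> x" "x \<le> \<beta>" for x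
  proof -
    have x01: "x \<in> {0..1}" using that ab by auto
    have "x0 - \<delta>'/2 \<le> x" "x \<le> x0 + \<delta>'/2" using that by (auto simp: \<alpha>_def \<beta>_def)
    then have xd: "\<bar>x - x0\<bar> \<le> \<delta>'/2" unfolding abs_le_iff by linarith
    then have "\<bar>ff x - ff x0\<bar> \<le> \<rho> / 3" using d d' by (auto simp: \<delta>'_def)
    moreover have "\<delta>'/2 < \<rho>/2" using d' rho by (simp add: \<delta>'_def)
    ultimately have "dist (gr x) (gr x0) < \<rho>" using dist_gr[of x x0] xd by linarith
    then show ?thesis using incl x01 x0 by simp
  qed
  obtain R c where mo: "linear_order_on A R" "c > 0"
    "\<forall>x\<in>A. \<forall>y\<in>A. \<forall>z\<in>A. (x, y) \<in> R \<and> x \<noteq> y \<and> (y, z) \<in> R \<and> y \<noteq> z \<longrightarrow> dist x y \<le> c * dist x z"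
    using mA unfolding monotone_space_def by blast
  interpret monodata A R c using mo by unfold_locales auto
  obtain a1 a2 a3 e D s where cf: "\<alpha> < a1" "a1 < a2" "a2 < a3" "a3 < \<beta>" "0 < e" "a1 \<le> a2 - e" "a2 + e \<le> a3"
     "0 < D" "0 < s" "2 * c * s \<le> D"
     "\<forall>x. e \<le> \<bar>x - a2\<bar> \<longrightarrow> D \<le> dist (gr x) (gr a2)"
     "\<forall>x. a2 \<le> x \<longrightarrow> D \<le> dist (gr x) (gr a1)"
     "\<forall>x. x \<le> a2 \<longrightarrow> D \<le> dist (gr x) (gr a3)"
     "dist (gr (a2 - e)) (gr (a2 + e)) \<le> s"
    using spike_config[OF ab mo(2)] by blast
  define \<eta> where "\<eta> = D / (8 * (c + 1))"
  have eta: "0 < \<eta>" using cf(8) mo(2) by (simp add: \<eta>_def)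
  have eta2: "2 * \<eta> * (c + 1) = D / 4" using mo(2) by (simp add: \<eta>_def field_simps)
  have etaD: "\<eta> < D / 4"
  proof -
    have "\<eta> * 1 \<le> \<eta> * (c + 1)" using eta mo(2) by (intro mult_left_mono) auto
    then show ?thesis using eta2 eta by linarith
  qed
  have key: "c * (s + 2 * \<eta>) + \<eta> < D - \<eta>"
  proof -
    have "c * (s + 2 * \<eta>) + \<eta> + \<eta> = c * s + 2 * \<eta> * (c + 1)" by (simp add: algebra_simps)
    then show ?thesis using eta2 cf(10) cf(8) by linarith
  qed
  have farfrom: "\<forall>P\<in>S. c * (s + 2 * \<eta>) + \<eta> < dist P z"
    if "\<forall>P\<in>S. D \<le> dist P T" "dist z T < \<eta>" for S T z
  proof
    fix P assume "P \<in> S"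
    then have "D \<le> dist P T" using that by auto
    moreover have "dist P T \<le> dist P z + dist z T" by (rule dist_triangle)
    ultimately show "c * (s + 2 * \<eta>) + \<eta> < dist P z" using key that(2) by linarith
  qed
  have top_cl: "gr a1 \<in> closure A" "gr a2 \<in> closure A" "gr a3 \<in> closure A"
    using inclI cf(1-4) by auto
  obtain z1 where z1: "z1 \<in> A" "dist z1 (gr a1) < \<eta>" using top_cl(1) eta by (auto simp: closure_approachable)
  obtain z2 where z2: "z2 \<in> A" "dist z2 (gr a2) < \<eta>" using top_cl(2) eta by (auto simp: closure_approachable)
  obtain z3 where z3: "z3 \<in> A" "dist z3 (gr a3) < \<eta>" using top_cl(3) eta by (auto simp: closure_approachable)
  have D12: "D \<le> dist (gr a1) (gr a2)" using cf(11)[rule_format, of a1] cf(1-7) by (simp add: dist_commute)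
  have D23: "D \<le> dist (gr a3) (gr a2)" using cf(11)[rule_format, of a3] cf(1-7) by simp
  have D13: "D \<le> dist (gr a3) (gr a1)" using cf(12)[rule_format, of a3] cf(1-7) by simp
  have neq: "z1 \<noteq> z2" "z2 \<noteq> z3" "z1 \<noteq> z3"
  proof -
    have "dist (gr a1) (gr a2) \<le> dist (gr a1) z1 + dist z1 (gr a2)" by (rule dist_triangle)
    moreover have "dist z1 (gr a2) \<le> dist z1 z2 + dist z2 (gr a2)" by (rule dist_triangle)
    ultimately have "D - 2 * \<eta> < dist z1 z2" using D12 z1(2) z2(2) by (simp add: dist_commute)
    then show "z1 \<noteq> z2" using etaD eta by auto
    have "dist (gr a3) (gr a2) \<le> dist (gr a3) z3 + dist z3 (gr a2)" by (rule dist_triangle)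
    moreover have "dist z3 (gr a2) \<le> dist z3 z2 + dist z2 (gr a2)" by (rule dist_triangle)
    ultimately have "D - 2 * \<eta> < dist z3 z2" using D23 z3(2) z2(2) by (simp add: dist_commute)
    then show "z2 \<noteq> z3" using etaD eta by auto
    have "dist (gr a3) (gr a1) \<le> dist (gr a3) z3 + dist z3 (gr a1)" by (rule dist_triangle)
    moreover have "dist z3 (gr a1) \<le> dist z3 z1 + dist z1 (gr a1)" by (rule dist_triangle)
    ultimately have "D - 2 * \<eta> < dist z3 z1" using D13 z3(2) z1(2) by (simp add: dist_commute)
    then show "z1 \<noteq> z3" using etaD eta by auto
  qed
  have s0: "0 \<le> s" using cf(9) by simp
  have clI: "gr ` {u..v} \<subseteq> closure A" if "\<alpha> \<le> u" "v \<le> \<beta>" for u v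
    using inclI that by auto
  consider "btw R z1 z2 z3" | "btw R z2 z1 z3" | "btw R z1 z3 z2"
    using three_btw[OF lin z1(1) z2(1) z3(1) neq] by blast
  then show False
  proof cases
    case 1
    define S where "S = gr ` {a1..a2 - e} \<union> gr ` {a2 + e..a3}"
    have r1: "reach S s (gr a1) (gr (a2 - e))"
      using reach_graph[OF cf(6) cf(9)] by (rule reach_mono) (auto simp: S_def)
    have r3: "reach S s (gr (a2 + e)) (gr a3)"
      using reach_graph[OF cf(7) cf(9)] by (rule reach_mono) (auto simp: S_def)
    have m1: "gr (a2 - e) \<in> S" unfolding S_def using cf(6) by auto
    have m2: "gr (a2 + e) \<in> S" unfolding S_def using cf(7) by auto
    have "reach S s (gr (a2 - e)) (gr (a2 + e))"
      by (rule reach.rstep[OF reach.rrefl[OF m1] m2 cf(14)])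
    then have r: "reach S s (gr a1) (gr a3)" using r1 r3 reach_trans by blast
    have Scl: "S \<subseteq> closure A" unfolding S_def using cf(1-7) by (intro Un_least clI) auto
    have far: "\<forall>P\<in>S. D \<le> dist P (gr a2)"
    proof
      fix P assume "P \<in> S"
      then obtain x where x: "P = gr x" "x \<le> a2 - e \<or> a2 + e \<le> x" by (auto simp: S_def)
      then have "e \<le> \<bar>x - a2\<bar>" by auto
      then show "D \<le> dist P (gr a2)" using cf(11) x by auto
    qed
    show False
      by (rule middle_false[OF eta z2(1) Scl farfrom[OF far z2(2)] r s0 z1 z3 1])
  next
    case 2
    define S where "S = gr ` {a2..a3}"
    have r: "reach S s (gr a2) (gr a3)" unfolding S_def using cf(3,9) by (intro reach_graph) auto
    have Scl: "S \<subseteq> closure A" unfolding S_def using cf(1-4) by (intro clI) auto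
    have far: "\<forall>P\<in>S. D \<le> dist P (gr a1)" using cf(12) by (auto simp: S_def)
    show False
      by (rule middle_false[OF eta z1(1) Scl farfrom[OF far z1(2)] r s0 z2 z3 2])
  next
    case 3
    define S where "S = gr ` {a1..a2}"
    have r: "reach S s (gr a1) (gr a2)" unfolding S_def using cf(2,9) by (intro reach_graph) auto
    have Scl: "S \<subseteq> closure A" unfolding S_def using cf(1-4) by (intro clI) auto
    have far: "\<forall>P\<in>S. D \<le> dist P (gr a3)" using cf(13) by (auto simp: S_def)
    show False
      by (rule middle_false[OF eta z3(1) Scl farfrom[OF far z3(2)] r s0 z1 z2 3])
  qed
qed

lemma gr_cont: "continuous_on {0..1} gr"
proof -
  have f: "continuous_on {0..1} ff" using ff_cont continuous_on_subset by blast
  show ?thesis unfolding gr_def by (intro continuous_on_Pair continuous_on_id f)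
qed

lemma GG_closed: "closed GG"
  unfolding GG_gr by (intro compact_imp_closed compact_continuous_image gr_cont) simp

lemma not_sigma: "\<not> sigma_monotone GG"
proof
  assume "sigma_monotone GG"
  then have "\<exists>M :: nat \<Rightarrow> (real \<times> real) set. (\<forall>n. monotone_space (M n)) \<and> GG = (\<Union>n. M n)"
    by (simp only: sigma_monotone_def)
  then obtain M :: "nat \<Rightarrow> (real \<times> real) set" where M: "\<And>n. monotone_space (M n)" "GG = (\<Union>n. M n)" by blast
  have MG: "M n \<subseteq> GG" for n using M(2) by auto
  have nd: "nowhere_dense_in (M n) GG" for n using mono_nd[OF MG M(1)] .
  define \<G> where "\<G> = range (\<lambda>n. GG - closure (M n))"
  have "GG \<subseteq> closure (\<Inter>\<G>)"
  proof (rule Baire[OF GG_closed])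
    show "countable \<G>" by (simp add: \<G>_def)
    fix T assume "T \<in> \<G>"
    then obtain n where n: "T = GG - closure (M n)" by (auto simp: \<G>_def)
    show "openin (top_of_set GG) T \<and> GG \<subseteq> closure T"
    proof
      have "T = GG \<inter> (- closure (M n))" using n by auto
      then show "openin (top_of_set GG) T" unfolding openin_open
        by (intro exI[of _ "- closure (M n)"] conjI) (simp_all add: open_Compl)
      show "GG \<subseteq> closure T"
      proof
        fix g assume g: "g \<in> GG"
        show "g \<in> closure T"
        proof (rule ccontr)
          assume "g \<notin> closure T"
          then obtain \<epsilon> where e: "0 < \<epsilon>" "\<forall>y\<in>T. \<not> dist y g < \<epsilon>" by (auto simp: closure_approachable)
          define W where "W = ball g \<epsilon> \<inter> GG"
          have "openin (subtopology euclidean GG) W" unfolding W_def openin_subtopology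
            by (intro exI[of _ "ball g \<epsilon>"] conjI) simp_all
          moreover have "g \<in> W" using g e by (simp add: W_def)
          moreover have "W \<subseteq> (subtopology euclidean GG) closure_of (M n)"
          proof
            fix y assume y: "y \<in> W"
            then have "y \<notin> T" using e by (auto simp: W_def dist_commute)
            then have "y \<in> closure (M n)" using y n by (auto simp: W_def)
            moreover have "GG \<inter> M n = M n" using MG[of n] by blast
            moreover have "y \<in> GG" using y by (simp add: W_def)
            ultimately show "y \<in> (subtopology euclidean GG) closure_of (M n)"
              by (simp add: closure_of_subtopology)
          qed
          ultimately have "g \<in> (subtopology euclidean GG) interior_of ((subtopology euclidean GG) closure_of (M n))"
            unfolding interior_of_def by blast
          then show False using nd[of n] by (simp add: nowhere_dense_in_def)
        qed
      qed
    qed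
  qed
  moreover have "\<Inter>\<G> = {}"
  proof -
    have "\<Inter>\<G> \<subseteq> GG - (\<Union>n. M n)" using closure_subset by (auto simp: \<G>_def)
    then show ?thesis using M(2) by auto
  qed
  moreover have "gr 0 \<in> GG" by (simp add: GG_gr)
  ultimately show False by simp
qed

theorem theorem7p3:
  shows "\<exists>f :: real \<Rightarrow> real.
           abs_continuous_on 0 1 f \<and>
           strongly_porous (graph_on {0..1} f) \<and>
           (\<forall>A. A \<subseteq> graph_on {0..1} f \<and> monotone_space A \<longrightarrow>
                nowhere_dense_in A (graph_on {0..1} f)) \<and>
           \<not> sigma_monotone (graph_on {0..1} f)"
  using ff_ac GG_porous mono_nd not_sigma unfolding GG_def by blast

end
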